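(* For all $n\in\mathbb{Z}_{\ge0}$ and $i\in\{1,2\}$, the operator $A_{i,n}\partial_i^{-1}$ is a self-adjoint differential operator in $\partial_i$ (with coefficients in $\mathcal{A}$).
   Context: Let $\mathcal{A}$ be the commutative $\mathbb{C}$-algebra of differential polynomials generated by $u$, $(v_i)_{i\ge0}$, $(w_j)_{j\ge0}$ and their jets under two commuting derivations $\partial_1,\partial_2$, subject to the relations $\partial_2(\mathcal{L}_1)=[\mathcal{L}_1,\partial_1^{-1}u]$ and $\partial_1(\mathcal{L}_2)=[\mathcal{L}_2,\partial_2^{-1}u]$, where $\mathcal{L}_1=\partial_1^{-1}(\partial_1^2+v_0+\partial_1^{-1}v_1\partial_1^{-1}+\partial_1^{-2}v_2\partial_1^{-2}+\cdots)$, $\mathcal{L}_2=\partial_2^{-1}(\partial_2^2+w_0+\partial_2^{-1}w_1\partial_2^{-1}+\partial_2^{-2}w_2\partial_2^{-2}+\cdots)$, and $\partial_2(\mathcal{L}_1)$ (resp. $\partial_1(\mathcal{L}_2)$) means $\partial_2$ (resp. $\partial_1$) applied to each coefficient $v_k$ (resp. $w_k$). Concretely $\mathcal{A}=\mathbb{C}[\partial_1^n(v_m),\partial_2^k(w_l),\partial_1^p\partial_2^q(u)]$ is a polynomial ring (a domain), and $\partial_2$-jets of the $v_m$ and $\partial_1$-jets of the $w_l$ are determined by the relations. Pseudodifferential operators over $\mathcal{A}$ are as usual: $\partial_i a=a\partial_i+\partial_i(a)$, $\partial_i^{-1}a=a\partial_i^{-1}-\partial_i(a)\partial_i^{-2}+\cdots$.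 The adjoint is the anti-automorphism with $\partial_i^*=-\partial_i$, $a^*=a$ for $a\in\mathcal{A}$, $(PQ)^*=Q^*P^*$. For $\mathcal{P}=\sum_n p_n\partial_i^n$ a pseudodifferential operator in $\partial_i$, $\mathcal{P}_+=\sum_{n\ge0}p_n\partial_i^n$ and $\mathcal{P}_-=\mathcal{P}-\mathcal{P}_+$. Define $A_{i,n}=(\mathcal{L}_i^{2n+1})_+\in\mathcal{A}[\partial_i]$. Note $\partial_i\mathcal{L}_i$ is self-adjoint, i.e. $\partial_i\mathcal{L}_i+\mathcal{L}_i^*\partial_i=0$. *)

theory Defs
  imports Main
begin

text \<open>An operator \<Sum>_j P j \<partial>^j is represented by its coefficient function P :: int \<Rightarrow> 'a,
  whose support must be bounded above.\<close>

definition is_psdo :: "(int \<Rightarrow> 'a::zero) \<Rightarrow> bool" where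
  "is_psdo P \<longleftrightarrow> (\<exists>N. \<forall>j>N. P j = 0)"

definition is_derivation :: "('a::comm_ring_1 \<Rightarrow> 'a) \<Rightarrow> bool" where
  "is_derivation d \<longleftrightarrow> (\<forall>a b. d (a + b) = d a + d b) \<and> (\<forall>a b. d (a * b) = a * d b + d a * b)"

definition pconst :: "'a::zero \<Rightarrow> int \<Rightarrow> 'a" where
  "pconst a = (\<lambda>j. if j = 0 then a else 0)"

definition pdpow :: "int \<Rightarrow> int \<Rightarrow> 'a::{zero,one}" where
  "pdpow m = (\<lambda>j. if j = m then 1 else 0)"

definition padd :: "(int \<Rightarrow> 'a::plus) \<Rightarrow> (int \<Rightarrow> 'a) \<Rightarrow> int \<Rightarrow> 'a" where
  "padd P Q = (\<lambda>j. P j + Q j)"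

definition psub :: "(int \<Rightarrow> 'a::minus) \<Rightarrow> (int \<Rightarrow> 'a) \<Rightarrow> int \<Rightarrow> 'a" where
  "psub P Q = (\<lambda>j. P j - Q j)"

text \<open>generalized binomial coefficient binom(m,k) = m(m-1)...(m-k+1)/k! for integer m\<close>
definition ibinom :: "int \<Rightarrow> nat \<Rightarrow> int" where
  "ibinom m k = (if 0 \<le> m then int (nat m choose k)
                 else (-1) ^ k * int ((nat (- m) + k - 1) choose k))"

text \<open>Product: (p \<partial>^m)(q \<partial>^n) = \<Sum>_{k\<ge>0} binom(m,k) p d^k(q) \<partial>^(m+n-k)\<close>
definition pmult :: "('a::comm_ring_1 \<Rightarrow> 'a) \<Rightarrow> (int \<Rightarrow> 'a) \<Rightarrow> (int \<Rightarrow> 'a) \<Rightarrow> int \<Rightarrow> 'a" where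
  "pmult d P Q = (\<lambda>j. \<Sum>(m, k) \<in> {(m, k::nat). P m \<noteq> 0 \<and> Q (j - m + int k) \<noteq> 0}.
      of_int (ibinom m k) * P m * (d ^^ k) (Q (j - m + int k)))"

primrec ppow :: "('a::comm_ring_1 \<Rightarrow> 'a) \<Rightarrow> (int \<Rightarrow> 'a) \<Rightarrow> nat \<Rightarrow> int \<Rightarrow> 'a" where
  "ppow d P 0 = pdpow 0"
| "ppow d P (Suc n) = pmult d (ppow d P n) P"

text \<open>locally finite (coefficientwise) infinite sum of operators\<close>
definition psum :: "(nat \<Rightarrow> int \<Rightarrow> 'a::comm_monoid_add) \<Rightarrow> int \<Rightarrow> 'a" where
  "psum F = (\<lambda>j. \<Sum>k \<in> {k. F k j \<noteq> 0}. F k j)"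

definition pplus :: "(int \<Rightarrow> 'a::zero) \<Rightarrow> int \<Rightarrow> 'a" where
  "pplus P = (\<lambda>j. if 0 \<le> j then P j else 0)"

text \<open>Formal adjoint: (\<Sum>_m p_m \<partial>^m)^* = \<Sum>_m (-\<partial>)^m p_m, written out in normal form.\<close>
definition padj :: "('a::comm_ring_1 \<Rightarrow> 'a) \<Rightarrow> (int \<Rightarrow> 'a) \<Rightarrow> int \<Rightarrow> 'a" where
  "padj d P = (\<lambda>j. \<Sum>k \<in> {k::nat. P (j + int k) \<noteq> 0}.
      (if even (j + int k) then 1 else -1) * of_int (ibinom (j + int k) k) * (d ^^ k) (P (j + int k)))"

definition is_diffop :: "(int \<Rightarrow> 'a::zero) \<Rightarrow> bool" where
  "is_diffop P \<longleftrightarrow> is_psdo P \<and> (\<forall>j<0. P j = 0)"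

definition self_adjoint :: "('a::comm_ring_1 \<Rightarrow> 'a) \<Rightarrow> (int \<Rightarrow> 'a) \<Rightarrow> bool" where
  "self_adjoint d P \<longleftrightarrow> padj d P = P"

definition Lax :: "('a::comm_ring_1 \<Rightarrow> 'a) \<Rightarrow> (nat \<Rightarrow> 'a) \<Rightarrow> int \<Rightarrow> 'a" where
  "Lax d v = pmult d (pdpow (-1))
     (padd (padd (pdpow 2) (pconst (v 0)))
       (psum (\<lambda>k. if k = 0 then (\<lambda>_. 0)
                  else pmult d (pmult d (pdpow (- int k)) (pconst (v k))) (pdpow (- int k)))))"

definition Aop :: "('a::comm_ring_1 \<Rightarrow> 'a) \<Rightarrow> (nat \<Rightarrow> 'a) \<Rightarrow> nat \<Rightarrow> int \<Rightarrow> 'a" where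
  "Aop d v n = pplus (ppow d (Lax d v) (2 * n + 1))"

end

theory Submission
  imports Defs "HOL-Library.Groups_Big_Fun" "HOL-Computational_Algebra.Formal_Power_Series"
begin


locale der = fixes d :: "'a::comm_ring_1 \<Rightarrow> 'a" assumes der: "is_derivation d"
begin
abbreviation D where "D k \<equiv> d ^^ k"
lemma d_add: "d (a+b) = d a + d b" using der by (simp add: is_derivation_def)
lemma d_mult: "d (a*b) = a * d b + d a * b" using der by (simp add: is_derivation_def)
lemma d_0[simp]: "d 0 = 0" using d_add[of 0 0] by simp
lemma d_1[simp]: "d 1 = 0" using d_mult[of 1 1] by simp
lemma d_neg: "d (-a) = - d a" using d_add[of a "-a"] by (simp add: add_eq_0_iff2)
lemma d_of_nat[simp]: "d (of_nat n) = 0" by (induct n) (simp_all add: d_add)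
lemma d_of_int[simp]: "d (of_int n) = 0"
proof -
  obtain a b where "n = int a - int b" by (rule int_diff_cases)
  then have "of_int n = of_nat a + - (of_nat b::'a)" by simp
  then show ?thesis by (simp only: d_add d_neg d_of_nat) simp
qed
lemma D_0[simp]: "D k 0 = 0" by (induct k) simp_all
lemma D_add: "D k (a+b) = D k a + D k b" by (induct k) (simp_all add: d_add)
lemma D_neg: "D k (-a) = - D k a" by (induct k) (simp_all add: d_neg)
lemma D_diff: "D k (a-b) = D k a - D k b" using D_add[of k a "-b"] D_neg by simp
lemma D_const_mult: "d c = 0 \<Longrightarrow> D k (c*a) = c * D k a" by (induct k) (simp_all add: d_mult)
lemma D_of_int_mult: "D k (of_int c*a) = of_int c * D k a" by (rule D_const_mult) simp
lemma D_sum: "D k (sum f A) = (\<Sum>x\<in>A. D k (f x))"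
  by (induct A rule: infinite_finite_induct) (simp_all add: D_add)
lemma D_Sum_any: "finite {x. f x \<noteq> 0} \<Longrightarrow> D k (Sum_any f) = Sum_any (\<lambda>x. D k (f x))"
  by (simp add: Sum_any.expand_superset[of "{x. f x \<noteq> 0}"] D_sum) (smt (verit, best) Collect_mono D_0 D_sum Sum_any.expand_superset)
lemma D_D: "D k (D l a) = D (k+l) a" by (simp add: funpow_add)
lemma D_1: "D k 1 = (if k = 0 then 1 else 0)" by (induct k) simp_all

lemma leibniz: "D n (a*b) = (\<Sum>k\<le>n. of_nat (n choose k) * D k a * D (n-k) b)"
proof (induct n)
  case 0
  then show ?case by simp
next
  case (Suc n)
  have decomp: "{0..n+1} = {0} \<union> {n + 1} \<union> {1..n}" and decomp2: "{0..n} = {0} \<union> {1..n}"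
    by auto
  have "D (n+1) (a*b) = d (\<Sum>k\<le>n. of_nat (n choose k) * D k a * D (n-k) b)"
    using Suc.hyps by simp
  also have "\<dots> = (\<Sum>k\<le>n. of_nat (n choose k) * D (k+1) a * D (n-k) b) +
      (\<Sum>k\<le>n. of_nat (n choose k) * D k a * D (n - k + 1) b)"
    apply (subst D_sum[of 1, simplified])
    by (simp add: d_mult D_const_mult[of _ 1, simplified] sum.distrib algebra_simps)
  also have "\<dots> = (\<Sum>k\<le>n. of_nat (n choose k) * D k a * D (n + 1 - k) b) +
      (\<Sum>k=1..n+1. of_nat (n choose (k - 1)) * D k a * D (n + 1 - k) b)"
    by (simp add: atMost_atLeast0 sum.shift_bounds_cl_Suc_ivl Suc_diff_le field_simps del: sum.cl_ivl_Suc)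
  also have "\<dots> = D (n + 1) b * a +
      (\<Sum>k=1..n. of_nat (n choose k) * D k a * D (n + 1 - k) b) + (D (n + 1) a * b +
      (\<Sum>k=1..n. of_nat (n choose (k - 1)) * D k a * D (n + 1 - k) b))"
      using sum.nat_ivl_Suc' [of 1 n "\<lambda>k. of_nat (n choose (k-1)) * D k a * D (n + 1 - k) b"]
    by (simp add: sum.atLeast_Suc_atMost atMost_atLeast0)
  also have "\<dots> = D (n + 1) a * b + D (n + 1) b * a +
      (\<Sum>k=1..n. of_nat (n + 1 choose k) * D k a * D (n + 1 - k) b)"
    by (auto simp add: field_simps sum.distrib [symmetric] choose_reduce_nat)
  also have "\<dots> = (\<Sum>k\<le>n+1. of_nat (n + 1 choose k) * D k a * D (n + 1 - k) b)"
    using decomp by (simp add: atMost_atLeast0 field_simps)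
  finally show ?case
    by simp
qed
end


lemma ibinom_rat: "(of_int (ibinom m k) :: rat) = (of_int m) gchoose k"
proof (cases "0 \<le> m")
  case True
  then obtain n where "m = int n" by (metis nonneg_int_cases)
  then show ?thesis by (simp add: ibinom_def binomial_gbinomial)
next
  case False
  define n where "n = nat (- m)"
  have n: "m = - int n" "n \<ge> 1" using False by (auto simp: n_def)
  then have "of_int m = - (of_nat n :: rat)" by simp
  moreover have "(of_nat n + of_nat k - 1 :: rat) = of_nat (n + k - 1)" using n by simp
  ultimately show ?thesis using n False
    by (simp add: ibinom_def gbinomial_minus binomial_gbinomial)
qed

lemma ibinom_nonneg_gt: "0 \<le> m \<Longrightarrow> m < int k \<Longrightarrow> ibinom m k = 0"
  by (simp add: ibinom_def)

definition sg :: "int \<Rightarrow> int" where "sg z = (if even z then 1 else -1)"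

lemma sg_add_nat: "sg (z + int c) = sg z * (-1)^c"
  by (induct c) (auto simp: sg_def algebra_simps)

lemma vander: "(\<Sum>c\<le>l. (x gchoose c) * (y gchoose (l - c))) = ((x + y) gchoose l :: rat)"
  using gbinomial_Vandermonde[of x y l] by (simp add: atMost_atLeast0)

lemma assoc_binom_rat:
  "(\<Sum>c\<le>l. (of_int m gchoose (a+c)) * of_nat ((a+c) choose a) * (of_int n gchoose (l-c)))
   = (of_int (n+m-int a) gchoose l) * (of_int m gchoose a :: rat)"
proof -
  have "\<And>c. (of_int m gchoose (a+c)) * of_nat ((a+c) choose a) = (of_int m gchoose a) * ((of_int m - of_nat a) gchoose c :: rat)"
    using gbinomial_trinomial_revision[of a "a+_" "of_int m :: rat"] by (simp add: binomial_gbinomial)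
  then have "(\<Sum>c\<le>l. (of_int m gchoose (a+c)) * of_nat ((a+c) choose a) * (of_int n gchoose (l-c)))
     = (of_int m gchoose a) * (\<Sum>c\<le>l. ((of_int m - of_nat a) gchoose c) * (of_int n gchoose (l-c)) :: rat)"
    by (simp add: sum_distrib_left mult.assoc)
  also have "\<dots> = (of_int m gchoose a) * ((of_int m - of_nat a + of_int n) gchoose l)" by (simp add: vander)
  finally show ?thesis by (simp add: algebra_simps)
qed

lemma assoc_binom:
  "(\<Sum>c\<le>l. ibinom m (a+c) * int ((a+c) choose a) * ibinom n (l-c)) = ibinom (n+m-int a) l * ibinom m a"
proof -
  have "(of_int (\<Sum>c\<le>l. ibinom m (a+c) * int ((a+c) choose a) * ibinom n (l-c)) :: rat) = of_int (ibinom (n+m-int a) l * ibinom m a)"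
    using assoc_binom_rat[of m a n l] by (simp add: ibinom_rat)
  then show ?thesis by (simp only: of_int_eq_iff)
qed


lemma Sum_any_reindex_inj:
  fixes f :: "'b \<Rightarrow> 'a::comm_monoid_add"
  assumes "inj g" "{x. f x \<noteq> 0} \<subseteq> range g"
  shows "Sum_any f = Sum_any (\<lambda>y. f (g y))"
proof -
  let ?S = "{x. f x \<noteq> 0}" and ?T = "{y. f (g y) \<noteq> 0}"
  have bij: "bij_betw g ?T ?S"
    unfolding bij_betw_def using assms by (auto intro: inj_on_subset) 
  show ?thesis
  proof (cases "finite ?S")
    case True
    then have "finite ?T" using bij bij_betw_finite by blast
    then show ?thesis using True
      by (simp add: Sum_any.expand_set sum.reindex_bij_betw[OF bij, symmetric])
  next
    case False
    then have "infinite ?T" using bij bij_betw_finite by blast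
    then show ?thesis using False by simp
  qed
qed

lemma Sum_any_pair:
  fixes g :: "'b \<Rightarrow> 'c \<Rightarrow> 'a::comm_monoid_add"
  assumes "finite {p. (case p of (a,b) \<Rightarrow> g a b) \<noteq> 0}"
  shows "Sum_any (\<lambda>a. Sum_any (g a)) = Sum_any (\<lambda>(a,b). g a b)"
proof -
  let ?S = "{p. (case p of (a,b) \<Rightarrow> g a b) \<noteq> 0}"
  have "{a. \<exists>b. g a b \<noteq> 0} \<times> {b. \<exists>a. g a b \<noteq> 0} \<subseteq> fst ` ?S \<times> snd ` ?S"
    by (auto simp: image_iff)
  then show ?thesis using assms by (intro Sum_any.cartesian_product[of "fst ` ?S \<times> snd ` ?S"]) auto
qed

lemma Sum_any_sum:
  fixes f :: "'i \<Rightarrow> 'b \<Rightarrow> 'a::comm_monoid_add"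
  assumes "finite A" "\<And>i. i \<in> A \<Longrightarrow> finite {x. f i x \<noteq> 0}"
  shows "Sum_any (\<lambda>x. \<Sum>i\<in>A. f i x) = (\<Sum>i\<in>A. Sum_any (f i))"
  using assms
proof (induct A rule: finite_induct)
  case empty
  then show ?case by simp
next
  case (insert a A)
  have fin: "finite {x. (\<Sum>i\<in>A. f i x) \<noteq> 0}"
  proof (rule finite_subset[of _ "\<Union>i\<in>A. {x. f i x \<noteq> 0}"])
    show "{x. (\<Sum>i\<in>A. f i x) \<noteq> 0} \<subseteq> (\<Union>i\<in>A. {x. f i x \<noteq> 0})"
      by (auto elim: sum.not_neutral_contains_not_neutral)
  qed (use insert in auto)
  have "Sum_any (\<lambda>x. \<Sum>i\<in>insert a A. f i x) = Sum_any (\<lambda>x. f a x + (\<Sum>i\<in>A. f i x))"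
    using insert by simp
  also have "\<dots> = Sum_any (f a) + Sum_any (\<lambda>x. \<Sum>i\<in>A. f i x)"
    using insert fin by (intro Sum_any.distrib) auto
  finally show ?case using insert by simp
qed

lemma Sum_any_diag:
  fixes h :: "nat \<Rightarrow> nat \<Rightarrow> 'a::comm_monoid_add"
  assumes fin: "finite {p. (case p of (a,c) \<Rightarrow> h a c) \<noteq> 0}"
  shows "Sum_any (\<lambda>(a,c). h a c) = Sum_any (\<lambda>n. \<Sum>a\<le>n. h a (n-a))"
proof -
  let ?g = "\<lambda>(a::nat,c::nat). (a+c, a)"
  let ?F = "\<lambda>(n,a). if a \<le> n then h a (n-a) else 0"
  have inj: "inj ?g" by (auto simp: inj_def)
  have supp: "{x. ?F x \<noteq> 0} = ?g ` {p. (case p of (a,c) \<Rightarrow> h a c) \<noteq> 0}"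
    by (auto simp: image_iff split: if_splits) (metis add_diff_inverse_nat not_le)
  have finF: "finite {x. ?F x \<noteq> 0}" by (simp only: supp) (rule finite_imageI[OF fin])
  have "\<And>n. (\<Sum>a\<le>n. h a (n-a)) = Sum_any (\<lambda>a. ?F (n,a))"
    by (subst Sum_any.conditionalize[of "{..n}"]) (auto intro!: Sum_any.cong)
  then have "Sum_any (\<lambda>n. \<Sum>a\<le>n. h a (n-a)) = Sum_any (\<lambda>n. Sum_any (\<lambda>a. ?F (n,a)))" by simp
  also have "\<dots> = Sum_any (\<lambda>(n,a). ?F (n,a))"
    by (rule Sum_any_pair) (use finF in \<open>simp only: case_prod_eta\<close>)
  also have "\<dots> = Sum_any ?F" by (simp only: case_prod_eta)
  also have "\<dots> = Sum_any (\<lambda>y. ?F (?g y))"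
    by (rule Sum_any_reindex_inj[OF inj]) (auto simp: supp)
  also have "\<dots> = Sum_any (\<lambda>(a,c). h a c)" by (auto intro!: Sum_any.cong)
  finally show ?thesis ..
qed

lemma Sum_any_reindex_inj_on:
  fixes f :: "'b \<Rightarrow> 'a::comm_monoid_add"
  assumes "inj_on g {y. f (g y) \<noteq> 0}" "{x. f x \<noteq> 0} \<subseteq> range g"
  shows "Sum_any f = Sum_any (\<lambda>y. f (g y))"
proof -
  let ?S = "{x. f x \<noteq> 0}" and ?T = "{y. f (g y) \<noteq> 0}"
  have bij: "bij_betw g ?T ?S"
    unfolding bij_betw_def using assms by auto
  show ?thesis
  proof (cases "finite ?S")
    case True
    then have "finite ?T" using bij bij_betw_finite by blast
    then show ?thesis using True
      by (simp add: Sum_any.expand_set sum.reindex_bij_betw[OF bij, symmetric])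
  next
    case False
    then have "infinite ?T" using bij bij_betw_finite by blast
    then show ?thesis using False by simp
  qed
qed

lemma Sum_any_pair':
  fixes g :: "'b \<Rightarrow> 'c \<Rightarrow> 'a::comm_monoid_add"
  assumes "finite {p. g (fst p) (snd p) \<noteq> 0}"
  shows "Sum_any (\<lambda>a. Sum_any (g a)) = Sum_any (\<lambda>p. g (fst p) (snd p))"
  using Sum_any_pair[of g] assms by (simp add: case_prod_beta)

lemma fin_supp_bij: "bij h \<Longrightarrow> finite {y. f (h y) \<noteq> 0} \<Longrightarrow> finite {x. f x \<noteq> 0}"
proof -
  assume b: "bij h" and f: "finite {y. f (h y) \<noteq> 0}"
  have "{x. f x \<noteq> 0} \<subseteq> h ` {y. f (h y) \<noteq> 0}"
  proof
    fix x assume x: "x \<in> {x. f x \<noteq> 0}"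
    obtain y where "x = h y" using b by (metis bij_pointE)
    with x show "x \<in> h ` {y. f (h y) \<noteq> 0}" by auto
  qed
  then show ?thesis using f finite_subset by blast
qed

lemma Sum_any_triple:
  fixes g :: "'b \<Rightarrow> 'c \<Rightarrow> 'd \<Rightarrow> 'a::comm_monoid_add"
  assumes fin: "finite {z. g (fst z) (fst (snd z)) (snd (snd z)) \<noteq> 0}"
  shows "Sum_any (\<lambda>a. Sum_any (\<lambda>b. Sum_any (\<lambda>c. g a b c))) = Sum_any (\<lambda>z. g (fst z) (fst (snd z)) (snd (snd z)))"
proof -
  have "\<And>a. Sum_any (\<lambda>b. Sum_any (\<lambda>c. g a b c)) = Sum_any (\<lambda>w. g a (fst w) (snd w))"
  proof (rule Sum_any_pair')
    fix a
    have "{p. g a (fst p) (snd p) \<noteq> 0} \<subseteq> snd ` {z. g (fst z) (fst (snd z)) (snd (snd z)) \<noteq> 0}"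
      by (auto simp: image_iff)
    then show "finite {p. g a (fst p) (snd p) \<noteq> 0}" using fin finite_surj by blast
  qed
  then have "Sum_any (\<lambda>a. Sum_any (\<lambda>b. Sum_any (\<lambda>c. g a b c))) = Sum_any (\<lambda>a. Sum_any (\<lambda>w. g a (fst w) (snd w)))"
    by simp
  also have "\<dots> = Sum_any (\<lambda>z. g (fst z) (fst (snd z)) (snd (snd z)))"
    by (rule Sum_any_pair'[of "\<lambda>a w. g a (fst w) (snd w)"]) (use fin in simp)
  finally show ?thesis .
qed

lemma Sum_any_pair_sum:
  fixes g :: "'b \<Rightarrow> 'c \<Rightarrow> nat \<Rightarrow> 'a::comm_monoid_add"
  assumes fin: "finite {z. (if snd (snd z) \<le> h (fst (snd z)) then g (fst z) (fst (snd z)) (snd (snd z)) else 0) \<noteq> 0}"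
  shows "Sum_any (\<lambda>p. \<Sum>c\<le>h (snd p). g (fst p) (snd p) c)
       = Sum_any (\<lambda>z. if snd (snd z) \<le> h (fst (snd z)) then g (fst z) (fst (snd z)) (snd (snd z)) else 0)"
proof -
  define g' where "g' a b c = (if c \<le> h b then g a b c else 0)" for a b c
  have e: "(\<Sum>c\<le>h b. g a b c) = Sum_any (g' a b)" for a b
    by (subst Sum_any.conditionalize[of "{..h b}"]) (auto simp: g'_def intro!: Sum_any.cong)
  have fin': "finite {z. g' (fst z) (fst (snd z)) (snd (snd z)) \<noteq> 0}" using fin by (simp add: g'_def)
  have "Sum_any (\<lambda>p. \<Sum>c\<le>h (snd p). g (fst p) (snd p) c) = Sum_any (\<lambda>p. Sum_any (g' (fst p) (snd p)))"
    by (simp add: e)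
  also have "\<dots> = Sum_any (\<lambda>a. Sum_any (\<lambda>b. Sum_any (g' a b)))"
  proof (rule Sum_any_pair'[symmetric, of "\<lambda>a b. Sum_any (g' a b)"])
    have "{p. Sum_any (g' (fst p) (snd p)) \<noteq> 0} \<subseteq> (\<lambda>z. (fst z, fst (snd z))) ` {z. g' (fst z) (fst (snd z)) (snd (snd z)) \<noteq> 0}"
    proof
      fix p assume "p \<in> {p. Sum_any (g' (fst p) (snd p)) \<noteq> 0}"
      then obtain c where "g' (fst p) (snd p) c \<noteq> 0" by (auto elim: Sum_any.not_neutral_obtains_not_neutral)
      then show "p \<in> (\<lambda>z. (fst z, fst (snd z))) ` {z. g' (fst z) (fst (snd z)) (snd (snd z)) \<noteq> 0}"
        by (intro image_eqI[of _ _ "(fst p, snd p, c)"]) auto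
    qed
    then show "finite {p. Sum_any (g' (fst p) (snd p)) \<noteq> 0}" using fin' finite_surj by blast
  qed
  also have "\<dots> = Sum_any (\<lambda>z. g' (fst z) (fst (snd z)) (snd (snd z)))"
    by (rule Sum_any_triple[OF fin'])
  finally show ?thesis by (simp add: g'_def)
qed


definition bnd :: "int \<Rightarrow> (int \<Rightarrow> 'a::zero) \<Rightarrow> bool" where "bnd N P \<longleftrightarrow> (\<forall>j>N. P j = 0)"

lemma bndD: "bnd N P \<Longrightarrow> P m \<noteq> 0 \<Longrightarrow> m \<le> N"
  unfolding bnd_def using not_le by blast
lemma bnd_mono: "bnd N P \<Longrightarrow> N \<le> M \<Longrightarrow> bnd M P"
  unfolding bnd_def by auto
lemma is_psdo_bnd: "is_psdo P \<longleftrightarrow> (\<exists>N. bnd N P)"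
  by (simp add: is_psdo_def bnd_def)

definition ib :: "int \<Rightarrow> nat \<Rightarrow> 'a::comm_ring_1" where "ib m k = of_int (ibinom m k)"

lemma ib_assoc: "ib (n+m-int k) l * ib m k = (\<Sum>c\<le>l. ib m (k+c) * of_nat ((k+c) choose k) * ib n (l-c))"
proof -
  have "(of_int (\<Sum>c\<le>l. ibinom m (k+c) * int ((k+c) choose k) * ibinom n (l-c)) :: 'a) = of_int (ibinom (n+m-int k) l * ibinom m k)"
    by (simp only: assoc_binom)
  then show ?thesis by (simp add: ib_def)
qed

lemma nat_bound: "int k \<le> z \<Longrightarrow> k \<le> nat z" by linarith

lemma ar4: "m \<le> N \<Longrightarrow> n \<le> N \<Longrightarrow> j - m + int k - n + int l \<le> N \<Longrightarrow>
   j - 2*N \<le> m \<and> j - 2*N \<le> n \<and> k \<le> nat (3*N-j) \<and> l \<le> nat (3*N-j)"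
  by (intro conjI nat_bound) linarith+

lemma fin2: "finite {p::int\<times>nat. fst p \<le> N \<and> j - fst p + int (snd p) \<le> M}"
proof (rule finite_subset[of _ "{j-M..N} \<times> {..nat (N+M-j)}"])
  show "{p::int\<times>nat. fst p \<le> N \<and> j - fst p + int (snd p) \<le> M} \<subseteq> {j-M..N} \<times> {..nat (N+M-j)}"
    by (auto intro!: nat_bound)
qed auto

definition box4 :: "int \<Rightarrow> int \<Rightarrow> ((int\<times>nat)\<times>(int\<times>nat)) set" where
  "box4 N j = ({j-2*N..N} \<times> {..nat (3*N-j)}) \<times> ({j-2*N..N} \<times> {..nat (3*N-j)})"
definition box5 :: "int \<Rightarrow> int \<Rightarrow> ((int\<times>nat)\<times>((int\<times>nat)\<times>nat)) set" where
  "box5 N j = ({j-2*N..N} \<times> {..nat (3*N-j)}) \<times> (({j-2*N..N} \<times> {..nat (3*N-j)}) \<times> {..nat (3*N-j)})"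
lemma fin_box4: "finite (box4 N j)" by (simp add: box4_def)
lemma fin_box5: "finite (box5 N j)" by (simp add: box5_def)

lemma in_box4: "m \<le> N \<Longrightarrow> n \<le> N \<Longrightarrow> j - m + int k - n + int l \<le> N \<Longrightarrow> ((m,k),(n,l)) \<in> box4 N j"
  using ar4[of m N n j k l] by (simp add: box4_def)
lemma in_box5: "m \<le> N \<Longrightarrow> n \<le> N \<Longrightarrow> j - m + int k - n + int l \<le> N \<Longrightarrow> c \<le> l \<Longrightarrow> ((m,k),((n,l),c)) \<in> box5 N j"
  using ar4[of m N n j k l] by (simp add: box5_def)
lemma in_box5': "m \<le> N \<Longrightarrow> n \<le> N \<Longrightarrow> j - m + int k - n + int l \<le> N \<Longrightarrow> c \<le> k \<Longrightarrow> ((m,k),((n,l),c)) \<in> box5 N j"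
  using ar4[of m N n j k l] by (simp add: box5_def)

lemma finite_supp_sub: "finite A \<Longrightarrow> (\<And>x. f x \<noteq> 0 \<Longrightarrow> x \<in> A) \<Longrightarrow> finite {x. f x \<noteq> 0}"
  by (rule finite_subset[of _ A]) auto

lemma Sum_any_mult_lr:
  fixes f :: "'b \<Rightarrow> 'a::comm_ring_1"
  assumes "finite {x. f x \<noteq> 0}"
  shows "a * Sum_any f * b = Sum_any (\<lambda>x. a * f x * b)"
proof -
  have f2: "finite {x. a * f x \<noteq> 0}" by (rule finite_subset[OF _ assms]) auto
  show ?thesis by (simp add: Sum_any_right_distrib[OF assms] Sum_any_left_distrib[OF f2])
qed

context der begin

definition pm :: "(int \<Rightarrow> 'a) \<Rightarrow> (int \<Rightarrow> 'a) \<Rightarrow> int \<Rightarrow> 'a" where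
  "pm P Q j = Sum_any (\<lambda>p. ib (fst p) (snd p) * P (fst p) * D (snd p) (Q (j - fst p + int (snd p))))"

lemma pm_fin:
  assumes "bnd N P" "bnd M Q"
  shows "finite {p. ib (fst p) (snd p) * P (fst p) * D (snd p) (Q (j - fst p + int (snd p))) \<noteq> 0}"
proof (rule finite_supp_sub[OF fin2[of N j M]])
  fix p :: "int \<times> nat" assume "ib (fst p) (snd p) * P (fst p) * D (snd p) (Q (j - fst p + int (snd p))) \<noteq> 0"
  then have "P (fst p) \<noteq> 0" "Q (j - fst p + int (snd p)) \<noteq> 0" by auto
  then show "p \<in> {p::int\<times>nat. fst p \<le> N \<and> j - fst p + int (snd p) \<le> M}"
    using bndD[OF assms(1)] bndD[OF assms(2)] by auto
qed

lemma pmult_eq: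
  assumes "bnd N P" "bnd M Q"
  shows "pmult d P Q = pm P Q"
proof
  fix j
  let ?S = "{(m, k::nat). P m \<noteq> 0 \<and> Q (j - m + int k) \<noteq> 0}"
  let ?f = "\<lambda>p. ib (fst p) (snd p) * P (fst p) * D (snd p) (Q (j - fst p + int (snd p)))"
  have fS: "finite ?S"
    by (rule finite_subset[OF _ fin2[of N j M]]) (auto dest: bndD[OF assms(1)] bndD[OF assms(2)])
  have "pm P Q j = sum ?f ?S"
    unfolding pm_def by (rule Sum_any.expand_superset[OF fS]) auto
  also have "\<dots> = pmult d P Q j"
    unfolding pmult_def by (auto simp: ib_def case_prod_beta intro!: sum.cong)
  finally show "pmult d P Q j = pm P Q j" ..
qed

lemma bnd_pm:
  assumes "bnd N P" "bnd M Q"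
  shows "bnd (N+M) (pm P Q)"
  unfolding bnd_def
proof (intro allI impI)
  fix j assume j: "j > N + M"
  have "\<And>p. ib (fst p) (snd p) * P (fst p) * D (snd p) (Q (j - fst p + int (snd p))) = 0"
  proof -
    fix p :: "int \<times> nat"
    show "ib (fst p) (snd p) * P (fst p) * D (snd p) (Q (j - fst p + int (snd p))) = 0"
    proof (cases "P (fst p) = 0")
      case False
      then have "fst p \<le> N" by (rule bndD[OF assms(1)])
      then have "Q (j - fst p + int (snd p)) = 0" using assms(2) j unfolding bnd_def by auto
      then show ?thesis by simp
    qed simp
  qed
  then show "pm P Q j = 0" unfolding pm_def by simp
qed

end


context der begin

lemma pm_assoc:
  assumes P: "bnd N P" and Q: "bnd N Q" and R: "bnd N R"
  shows "pm (pm P Q) R j = pm P (pm Q R) j"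
proof -
  define X where "X m k n l = P m * D k (Q n) * D l (R (j - m + int k - n + int l))" for m k n l
  define W where "W z = (if snd (snd z) \<le> snd (fst (snd z)) then
      ib (fst (fst z)) (snd (fst z) + snd (snd z)) * of_nat ((snd (fst z) + snd (snd z)) choose (snd (fst z)))
        * ib (fst (fst (snd z))) (snd (fst (snd z)) - snd (snd z))
        * X (fst (fst z)) (snd (fst z)) (fst (fst (snd z))) (snd (fst (snd z))) else 0)"
    for z :: "(int\<times>nat)\<times>((int\<times>nat)\<times>nat)"
  have Xnz: "X m k n l \<noteq> 0 \<Longrightarrow> P m \<noteq> 0 \<and> Q n \<noteq> 0 \<and> R (j - m + int k - n + int l) \<noteq> 0" for m k n l
    by (auto simp: X_def)
  have Xbox: "X m k n l \<noteq> 0 \<Longrightarrow> c \<le> l \<Longrightarrow> ((m,k),((n,l),c)) \<in> box5 N j" for m k n l c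
    using Xnz[of m k n l] bndD[OF P] bndD[OF Q] bndD[OF R] by (auto intro!: in_box5)
  define G where "G x y = ib (fst x) (snd x) * (ib (fst y) (snd y) * P (fst y) * D (snd y) (Q (fst x - fst y + int (snd y))))
        * D (snd x) (R (j - fst x + int (snd x)))" for x y :: "int \<times> nat"
  define \<phi> where "\<phi> z = ((fst (snd z) + fst (fst z) - int (snd (fst z)), snd (snd z)), fst z)" for z :: "(int\<times>nat)\<times>(int\<times>nat)"
  have bij\<phi>: "bij \<phi>"
  proof (rule bij_betw_byWitness[where f' = "\<lambda>w. (snd w, (fst (fst w) - fst (snd w) + int (snd (snd w)), snd (fst w)))"])
  qed (auto simp: \<phi>_def)
  have G\<phi>: "G (fst (\<phi> z)) (snd (\<phi> z)) = ib (fst (snd z) + fst (fst z) - int (snd (fst z))) (snd (snd z)) * ib (fst (fst z)) (snd (fst z))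
      * X (fst (fst z)) (snd (fst z)) (fst (snd z)) (snd (snd z))" for z
    by (simp add: G_def \<phi>_def X_def algebra_simps)
  have finG\<phi>: "finite {z. G (fst (\<phi> z)) (snd (\<phi> z)) \<noteq> 0}"
  proof (rule finite_supp_sub[OF fin_box4[of N j]])
    fix z assume "G (fst (\<phi> z)) (snd (\<phi> z)) \<noteq> 0"
    then have "X (fst (fst z)) (snd (fst z)) (fst (snd z)) (snd (snd z)) \<noteq> 0" by (auto simp: G\<phi>)
    from Xnz[OF this] show "z \<in> box4 N j"
      using bndD[OF P] bndD[OF Q] bndD[OF R] in_box4 by (metis prod.collapse)
  qed
  have "pm (pm P Q) R j = Sum_any (\<lambda>x. ib (fst x) (snd x) * pm P Q (fst x) * D (snd x) (R (j - fst x + int (snd x))))"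
    by (simp add: pm_def)
  also have "\<dots> = Sum_any (\<lambda>x. Sum_any (\<lambda>y. G x y))"
  proof (rule Sum_any.cong)
    fix x :: "int \<times> nat"
    show "ib (fst x) (snd x) * pm P Q (fst x) * D (snd x) (R (j - fst x + int (snd x))) = Sum_any (G x)"
      unfolding pm_def G_def
      by (rule Sum_any_mult_lr[OF pm_fin[OF P Q]])
  qed
  also have "\<dots> = Sum_any (\<lambda>p. G (fst p) (snd p))"
    by (rule Sum_any_pair') (rule fin_supp_bij[OF bij\<phi>], use finG\<phi> in simp)
  also have "\<dots> = Sum_any (\<lambda>z. G (fst (\<phi> z)) (snd (\<phi> z)))"
    by (rule Sum_any_reindex_inj) (use bij\<phi> in \<open>auto simp: bij_is_inj bij_is_surj\<close>)
  also have "\<dots> = Sum_any (\<lambda>z. \<Sum>c\<le>snd (snd z). ib (fst (fst z)) (snd (fst z) + c) * of_nat ((snd (fst z) + c) choose (snd (fst z)))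
        * ib (fst (snd z)) (snd (snd z) - c) * X (fst (fst z)) (snd (fst z)) (fst (snd z)) (snd (snd z)))"
    by (rule Sum_any.cong) (simp add: G\<phi> ib_assoc sum_distrib_right)
  also have "\<dots> = Sum_any W"
  proof (subst Sum_any_pair_sum[where h = snd])
    show "finite {z. (if snd (snd z) \<le> snd (fst (snd z)) then
          ib (fst (fst z)) (snd (fst z) + snd (snd z)) * of_nat ((snd (fst z) + snd (snd z)) choose (snd (fst z)))
        * ib (fst (fst (snd z))) (snd (fst (snd z)) - snd (snd z))
        * X (fst (fst z)) (snd (fst z)) (fst (fst (snd z))) (snd (fst (snd z))) else 0) \<noteq> 0}"
    proof (rule finite_supp_sub[OF fin_box5[of N j]])
      fix z :: "(int\<times>nat)\<times>((int\<times>nat)\<times>nat)"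
      assume "(if snd (snd z) \<le> snd (fst (snd z)) then
          ib (fst (fst z)) (snd (fst z) + snd (snd z)) * of_nat ((snd (fst z) + snd (snd z)) choose (snd (fst z)))
        * ib (fst (fst (snd z))) (snd (fst (snd z)) - snd (snd z))
        * X (fst (fst z)) (snd (fst z)) (fst (fst (snd z))) (snd (fst (snd z))) else 0) \<noteq> 0"
      then have "X (fst (fst z)) (snd (fst z)) (fst (fst (snd z))) (snd (fst (snd z))) \<noteq> 0" "snd (snd z) \<le> snd (fst (snd z))"
        by (auto split: if_splits)
      from Xbox[OF this] show "z \<in> box5 N j" by simp
    qed
  qed (simp add: W_def)
  finally have L: "pm (pm P Q) R j = Sum_any W" .
  define Y where "Y x y a = (if a \<le> snd x then ib (fst x) (snd x) * P (fst x) * (ib (fst y) (snd y) *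
      (of_nat (snd x choose a) * D a (Q (fst y)) * D (snd x - a + snd y) (R (j - fst x + int (snd x) - fst y + int (snd y))))) else 0)"
    for x y :: "int \<times> nat" and a :: nat
  define g where "g z = (if snd (snd z) \<le> snd (fst (snd z)) then
      ((fst (fst z), snd (fst z) + snd (snd z)), ((fst (fst (snd z)), snd (fst (snd z)) - snd (snd z)), snd (fst z)))
      else ((fst (fst z), 0), ((fst (fst (snd z)), 0), 1)))" for z :: "(int\<times>nat)\<times>((int\<times>nat)\<times>nat)"
  have step_b: "ib (fst x) (snd x) * P (fst x) * D (snd x) (pm Q R (j - fst x + int (snd x))) = Sum_any (\<lambda>y. Sum_any (\<lambda>a. Y x y a))" for x
  proof -
    let ?t = "j - fst x + int (snd x)"
    let ?c = "ib (fst x) (snd x) * P (fst x)"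
    let ?F = "\<lambda>y. ib (fst y) (snd y) * (\<Sum>a\<le>snd x. of_nat (snd x choose a) * D a (Q (fst y)) * D (snd x - a + snd y) (R (?t - fst y + int (snd y))))"
    have fin1: "finite {y. ib (fst y) (snd y) * Q (fst y) * D (snd y) (R (?t - fst y + int (snd y))) \<noteq> 0}"
      by (rule pm_fin[OF Q R])
    have eqF: "D (snd x) (ib (fst y) (snd y) * Q (fst y) * D (snd y) (R (?t - fst y + int (snd y)))) = ?F y" for y
    proof -
      have "D (snd x) (ib (fst y) (snd y) * Q (fst y) * D (snd y) (R (?t - fst y + int (snd y))))
          = ib (fst y) (snd y) * D (snd x) (Q (fst y) * D (snd y) (R (?t - fst y + int (snd y))))"
        by (simp only: mult.assoc ib_def D_of_int_mult)
      also have "\<dots> = ?F y" by (simp only: leibniz D_D)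
      finally show ?thesis .
    qed
    have "D (snd x) (pm Q R ?t) = Sum_any (\<lambda>y. D (snd x) (ib (fst y) (snd y) * Q (fst y) * D (snd y) (R (?t - fst y + int (snd y)))))"
      unfolding pm_def by (rule D_Sum_any[OF fin1])
    also have "\<dots> = Sum_any ?F"
      by (simp only: eqF)
    finally have e1: "D (snd x) (pm Q R ?t) = Sum_any ?F" .
    have finF: "finite {y. ?F y \<noteq> 0}"
    proof (rule finite_subset[OF _ fin1], rule subsetI, rule CollectI)
      fix y assume "y \<in> {y. ?F y \<noteq> 0}"
      then have "?F y \<noteq> 0" by simp
      then show "ib (fst y) (snd y) * Q (fst y) * D (snd y) (R (?t - fst y + int (snd y))) \<noteq> 0"
        by (metis eqF D_0)
    qed
    have "?c * D (snd x) (pm Q R ?t) = Sum_any (\<lambda>y. ?c * ?F y)"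
      unfolding e1 by (rule Sum_any_right_distrib[OF finF])
    also have "\<dots> = Sum_any (\<lambda>y. Sum_any (\<lambda>a. Y x y a))"
    proof (rule Sum_any.cong)
      fix y
      have "?c * ?F y = (\<Sum>a\<le>snd x. ?c * (ib (fst y) (snd y) * (of_nat (snd x choose a) * D a (Q (fst y)) * D (snd x - a + snd y) (R (?t - fst y + int (snd y))))))"
        by (simp add: sum_distrib_left)
      also have "\<dots> = Sum_any (\<lambda>a. Y x y a)"
        by (subst Sum_any.conditionalize) (auto simp: Y_def algebra_simps intro!: Sum_any.cong)
      finally show "?c * ?F y = Sum_any (\<lambda>a. Y x y a)" .
    qed
    finally show ?thesis .
  qed
  have Ynz: "Y x y a \<noteq> 0 \<Longrightarrow> a \<le> snd x \<and> P (fst x) \<noteq> 0 \<and> Q (fst y) \<noteq> 0 \<and> R (j - fst x + int (snd x) - fst y + int (snd y)) \<noteq> 0" for x y a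
    by (auto simp: Y_def split: if_splits)
  have "pm P (pm Q R) j = Sum_any (\<lambda>x. ib (fst x) (snd x) * P (fst x) * D (snd x) (pm Q R (j - fst x + int (snd x))))"
    by (simp add: pm_def)
  also have "\<dots> = Sum_any (\<lambda>x. Sum_any (\<lambda>y. Sum_any (\<lambda>a. Y x y a)))"
    by (simp add: step_b)
  also have "\<dots> = Sum_any (\<lambda>z. Y (fst z) (fst (snd z)) (snd (snd z)))"
  proof (rule Sum_any_triple, rule finite_supp_sub[OF fin_box5[of N j]])
    fix z :: "(int\<times>nat)\<times>((int\<times>nat)\<times>nat)"
    assume "Y (fst z) (fst (snd z)) (snd (snd z)) \<noteq> 0"
    from Ynz[OF this] show "z \<in> box5 N j"
      using bndD[OF P] bndD[OF Q] bndD[OF R] in_box5' by (metis prod.collapse)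
  qed
  also have "\<dots> = Sum_any (\<lambda>z. Y (fst (g z)) (fst (snd (g z))) (snd (snd (g z))))"
  proof (rule Sum_any_reindex_inj_on)
    show "inj_on g {z. Y (fst (g z)) (fst (snd (g z))) (snd (snd (g z))) \<noteq> 0}"
    proof (rule inj_onI)
      fix z1 z2 assume a1: "z1 \<in> {z. Y (fst (g z)) (fst (snd (g z))) (snd (snd (g z))) \<noteq> 0}"
        and a2: "z2 \<in> {z. Y (fst (g z)) (fst (snd (g z))) (snd (snd (g z))) \<noteq> 0}" and e: "g z1 = g z2"
      have c1: "snd (snd z1) \<le> snd (fst (snd z1))" using a1 by (auto simp: g_def Y_def split: if_splits)
      have c2: "snd (snd z2) \<le> snd (fst (snd z2))" using a2 by (auto simp: g_def Y_def split: if_splits)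
      have "fst (fst z1) = fst (fst z2) \<and> snd (fst z1) + snd (snd z1) = snd (fst z2) + snd (snd z2) \<and>
          fst (fst (snd z1)) = fst (fst (snd z2)) \<and> snd (fst (snd z1)) - snd (snd z1) = snd (fst (snd z2)) - snd (snd z2) \<and>
          snd (fst z1) = snd (fst z2)" using e c1 c2 by (simp add: g_def)
      then show "z1 = z2" using c1 c2 by (auto simp: prod_eq_iff)
    qed
  next
    show "{w. Y (fst w) (fst (snd w)) (snd (snd w)) \<noteq> 0} \<subseteq> range g"
    proof
      fix w assume "w \<in> {w. Y (fst w) (fst (snd w)) (snd (snd w)) \<noteq> 0}"
      then have a: "snd (snd w) \<le> snd (fst w)" using Ynz by auto
      have "w = g ((fst (fst w), snd (snd w)), ((fst (fst (snd w)), snd (fst w) - snd (snd w) + snd (fst (snd w))), snd (fst w) - snd (snd w)))"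
        using a by (simp add: g_def prod_eq_iff)
      then show "w \<in> range g" by blast
    qed
  qed
  also have "\<dots> = Sum_any W"
  proof (rule Sum_any.cong)
    fix z :: "(int\<times>nat)\<times>((int\<times>nat)\<times>nat)"
    show "Y (fst (g z)) (fst (snd (g z))) (snd (snd (g z))) = W z"
    proof (cases "snd (snd z) \<le> snd (fst (snd z))")
      case True
      obtain m k n l c where z: "z = ((m,k),((n,l),c))" by (metis prod.collapse)
      have cl: "c \<le> l" using True z by simp
      have e1: "k + c - k + (l - c) = l" using cl by simp
      have e2: "j - m + int (k + c) - n + int (l - c) = j - m + int k - n + int l" using cl by simp
      have "Y (fst (g z)) (fst (snd (g z))) (snd (snd (g z))) = ib m (k+c) * P m * (ib n (l-c) * (of_nat ((k+c) choose k) * D k (Q n)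
          * D (k + c - k + (l - c)) (R (j - m + int (k + c) - n + int (l - c)))))"
        using cl by (simp add: z g_def Y_def)
      also have "\<dots> = ib m (k+c) * P m * (ib n (l-c) * (of_nat ((k+c) choose k) * D k (Q n)
          * D l (R (j - m + int k - n + int l))))" by (simp only: e1 e2)
      also have "\<dots> = W z" using cl by (simp add: z W_def X_def mult_ac)
      finally show ?thesis .
    next
      case False
      then show ?thesis by (simp add: g_def Y_def W_def)
    qed
  qed
  finally have RR: "pm P (pm Q R) j = Sum_any W" .
  show ?thesis using L RR by simp
qed

end


lemma sg_add: "sg (x + y) = sg x * sg y"
  by (auto simp: sg_def)

lemma sg_sq: "sg x * sg x = 1" by (auto simp: sg_def)

lemma sg_neg: "sg (- x) = sg x" by (auto simp: sg_def)

lemma adj_binom_rat: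
  fixes j m :: int and a e :: nat
  shows "(\<Sum>c\<le>e. of_int (sg (j+int a+int c)) * (of_int (j+int a+int c) gchoose (a+c)) * of_nat ((a+c) choose a) * (of_int m gchoose (e-c)))
   = (of_int (sg (j - m + int a + int e)) * of_int (sg m) * (of_int (j-m+int a+int e) gchoose e) *
      (\<Sum>c\<le>a. (of_int (j-m+int a) gchoose c) * (of_int m gchoose (a-c))) :: rat)"
proof -
  let ?x = "of_int (j + int a) :: rat"
  have t: "(of_int (j+int a+int c) gchoose (a+c)) * of_nat ((a+c) choose a) = (?x gchoose a) * (of_int (j+int a+int c) gchoose c)" for c
  proof -
    have "(of_int (j+int a+int c) gchoose (a+c)) * of_nat ((a+c) choose a) = (of_int (j+int a+int c) gchoose (a+c)) * (of_nat (a+c) gchoose c :: rat)"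
    proof -
      have "(a+c) choose a = (a+c) choose c" by (metis add_diff_cancel_left' binomial_symmetric le_add1)
      then have "of_nat ((a+c) choose a) = (of_nat (a+c) gchoose c :: rat)" by (simp only: binomial_gbinomial)
      then show ?thesis by simp
    qed
    also have "\<dots> = (of_int (j+int a+int c) gchoose c) * ((of_int (j+int a+int c) - of_nat c) gchoose (a+c-c))"
      by (rule gbinomial_trinomial_revision) simp
    also have "\<dots> = (?x gchoose a) * (of_int (j+int a+int c) gchoose c)" by (simp add: mult.commute)
    finally show ?thesis .
  qed
  have s: "of_int (sg (j+int a+int c)) * (of_int (j+int a+int c) gchoose c) = of_int (sg (j + int a)) * ((- ?x - 1) gchoose c)" for c
  proof -
    have "((- ?x - 1) gchoose c) = ((-(?x + 1)) gchoose c)"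
      by (rule arg_cong[where f="\<lambda>z. z gchoose c"]) simp
    also have "\<dots> = (-1)^c * ((?x + 1 + of_nat c - 1) gchoose c)" by (rule gbinomial_minus)
    also have "(?x + 1 + of_nat c - 1) = of_int (j + int a + int c)" by simp
    finally have "((- ?x - 1) gchoose c) = (-1)^c * (of_int (j + int a + int c) gchoose c)" .
    then show ?thesis using sg_add_nat[of "j + int a" c] by (simp add: algebra_simps)
  qed
  have "(\<Sum>c\<le>e. of_int (sg (j+int a+int c)) * (of_int (j+int a+int c) gchoose (a+c)) * of_nat ((a+c) choose a) * (of_int m gchoose (e-c)))
      = (\<Sum>c\<le>e. (?x gchoose a) * of_int (sg (j + int a)) * (((- ?x - 1) gchoose c) * (of_int m gchoose (e-c))))"
  proof (rule sum.cong)
    fix c assume "c \<in> {..e}"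
    have "of_int (sg (j+int a+int c)) * (of_int (j+int a+int c) gchoose (a+c)) * of_nat ((a+c) choose a) * (of_int m gchoose (e-c))
       = (?x gchoose a) * (of_int (sg (j+int a+int c)) * (of_int (j+int a+int c) gchoose c)) * (of_int m gchoose (e-c))"
      using t[of c] by (simp add: algebra_simps)
    also have "\<dots> = (?x gchoose a) * of_int (sg (j + int a)) * (((- ?x - 1) gchoose c) * (of_int m gchoose (e-c)))"
      unfolding s by (simp only: mult_ac)
    finally show "of_int (sg (j+int a+int c)) * (of_int (j+int a+int c) gchoose (a+c)) * of_nat ((a+c) choose a) * (of_int m gchoose (e-c))
       = (?x gchoose a) * of_int (sg (j + int a)) * (((- ?x - 1) gchoose c) * (of_int m gchoose (e-c)))" .
  qed simp
  also have "\<dots> = (?x gchoose a) * of_int (sg (j + int a)) * ((- ?x - 1 + of_int m) gchoose e)"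
    by (simp add: sum_distrib_left[symmetric] vander)
  also have "((- ?x - 1 + of_int m) gchoose e) = (-1)^e * ((of_int (j - m + int a + int e)) gchoose e)"
  proof -
    have "((- ?x - 1 + of_int m) gchoose e) = ((-(?x + 1 - of_int m)) gchoose e)"
      by (rule arg_cong[where f="\<lambda>z. z gchoose e"]) simp
    also have "\<dots> = (-1)^e * ((?x + 1 - of_int m + of_nat e - 1) gchoose e)" by (rule gbinomial_minus)
    also have "(?x + 1 - of_int m + of_nat e - 1) = of_int (j - m + int a + int e)" by simp
    finally show ?thesis .
  qed
  finally have L: "(\<Sum>c\<le>e. of_int (sg (j+int a+int c)) * (of_int (j+int a+int c) gchoose (a+c)) * of_nat ((a+c) choose a) * (of_int m gchoose (e-c)))
     = (?x gchoose a) * of_int (sg (j + int a)) * ((-1)^e * ((of_int (j - m + int a + int e)) gchoose e))" .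
  have V: "(\<Sum>c\<le>a. (of_int (j-m+int a) gchoose c) * (of_int m gchoose (a-c))) = (?x gchoose a :: rat)"
    using vander[of "of_int (j-m+int a)" "of_int m" a] by simp
  have sgs: "of_int (sg (j - m + int a + int e)) * of_int (sg m) = (of_int (sg (j + int a)) * (-1)^e :: rat)"
  proof -
    have "sg (j - m + int a + int e) * sg m = sg (j - m + int a + int e + m)" by (rule sg_add[symmetric])
    also have "\<dots> = sg (j + int a + int e)" by (simp add: add.assoc)
    also have "\<dots> = sg (j + int a) * (-1)^e" by (rule sg_add_nat)
    finally show ?thesis by (metis of_int_mult of_int_power of_int_minus of_int_1)
  qed
  show ?thesis unfolding L V using sgs by (simp add: algebra_simps)
qed

lemma adj_binom:
  fixes j m :: int and a e :: nat
  shows "(\<Sum>c\<le>e. sg (j+int a+int c) * ibinom (j+int a+int c) (a+c) * int ((a+c) choose a) * ibinom m (e-c))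
   = sg (j - m + int a + int e) * sg m * ibinom (j-m+int a+int e) e *
      (\<Sum>c\<le>a. ibinom (j-m+int a) c * ibinom m (a-c))"
proof -
  have "(of_int (\<Sum>c\<le>e. sg (j+int a+int c) * ibinom (j+int a+int c) (a+c) * int ((a+c) choose a) * ibinom m (e-c)) :: rat)
     = of_int (sg (j - m + int a + int e) * sg m * ibinom (j-m+int a+int e) e *
      (\<Sum>c\<le>a. ibinom (j-m+int a) c * ibinom m (a-c)))"
    using adj_binom_rat[where j=j and m=m and a=a and e=e] by (simp add: ibinom_rat)
  then show ?thesis by (simp only: of_int_eq_iff)
qed


definition sga :: "int \<Rightarrow> 'a::comm_ring_1" where "sga z = of_int (sg z)"

lemma ib_adj:
  fixes j m :: int and a e :: nat
  shows "(\<Sum>c\<le>e. sga (j+int a+int c) * ib (j+int a+int c) (a+c) * of_nat ((a+c) choose a) * ib m (e-c))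
   = sga (j - m + int a + int e) * sga m * ib (j-m+int a+int e) e *
      (\<Sum>c\<le>a. ib (j-m+int a) c * ib m (a-c) :: 'a::comm_ring_1)"
proof -
  have "(of_int (\<Sum>c\<le>e. sg (j+int a+int c) * ibinom (j+int a+int c) (a+c) * int ((a+c) choose a) * ibinom m (e-c)) :: 'a)
     = of_int (sg (j - m + int a + int e) * sg m * ibinom (j-m+int a+int e) e *
      (\<Sum>c\<le>a. ibinom (j-m+int a) c * ibinom m (a-c)))"
    by (simp only: adj_binom)
  then show ?thesis by (simp add: ib_def sga_def)
qed

lemma arL: "m \<le> N \<Longrightarrow> j + int t - m + int k \<le> N \<Longrightarrow> a \<le> t \<Longrightarrow>
   (t, ((m,k),a)) \<in> {..nat (2*N-j)} \<times> (({j-N..N} \<times> {..nat (2*N-j)}) \<times> {..nat (2*N-j)})"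
  by (auto intro!: nat_bound)

lemma arR: "n + int r \<le> N \<Longrightarrow> j - n + int l + int u \<le> N \<Longrightarrow>
   ((n,l),(r,u)) \<in> ({j-N..N} \<times> {..nat (2*N-j)}) \<times> ({..nat (2*N-j)} \<times> {..nat (2*N-j)})"
  by (auto intro!: nat_bound)

lemma arT: "m \<le> N \<Longrightarrow> j - m + int a + int e \<le> N \<Longrightarrow> c \<le> e \<or> c \<le> a \<Longrightarrow>
   ((m,a),(e,c)) \<in> ({j-N..N} \<times> {..nat (2*N-j)}) \<times> ({..nat (2*N-j)} \<times> {..nat (2*N-j)})"
proof -
  assume h: "m \<le> N" "j - m + int a + int e \<le> N" "c \<le> e \<or> c \<le> a"
  have "e \<le> nat (2*N-j)" "a \<le> nat (2*N-j)" using h by (auto intro!: nat_bound)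
  then show ?thesis using h by auto
qed

context der begin

definition pa :: "(int \<Rightarrow> 'a) \<Rightarrow> int \<Rightarrow> 'a" where
  "pa P j = Sum_any (\<lambda>k. sga (j + int k) * ib (j + int k) k * D k (P (j + int k)))"

lemma pa_fin:
  assumes "bnd N P"
  shows "finite {k. sga (j + int k) * ib (j + int k) k * D k (P (j + int k)) \<noteq> 0}"
proof (rule finite_supp_sub[of "{..nat (N-j)}"])
  fix k assume "sga (j + int k) * ib (j + int k) k * D k (P (j + int k)) \<noteq> 0"
  then have "P (j + int k) \<noteq> 0" by auto
  then have "j + int k \<le> N" by (rule bndD[OF assms])
  then show "k \<in> {..nat (N-j)}" by (auto intro!: nat_bound)
qed simp

lemma padj_eq:
  assumes "bnd N P"
  shows "padj d P = pa P"
proof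
  fix j
  let ?S = "{k::nat. P (j + int k) \<noteq> 0}"
  have fS: "finite ?S"
    by (rule finite_subset[of _ "{..nat (N-j)}"]) (auto dest!: bndD[OF assms] intro!: nat_bound)
  have "pa P j = sum (\<lambda>k. sga (j + int k) * ib (j + int k) k * D k (P (j + int k))) ?S"
    unfolding pa_def by (rule Sum_any.expand_superset[OF fS]) auto
  also have "\<dots> = padj d P j"
    unfolding padj_def by (auto simp: ib_def sga_def sg_def intro!: sum.cong)
  finally show "padj d P j = pa P j" ..
qed

lemma bnd_pa: "bnd N P \<Longrightarrow> bnd N (pa P)"
  unfolding bnd_def pa_def by simp

lemma pa_mult:
  assumes P: "bnd N P" and Q: "bnd N Q"
  shows "pa (pm P Q) j = pm (pa Q) (pa P) j"
proof -
  define Z where "Z m a e = D a (P m) * D e (Q (j - m + int a + int e))" for m a e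
  have Znz: "Z m a e \<noteq> 0 \<Longrightarrow> m \<le> N \<and> j - m + int a + int e \<le> N" for m a e
  proof -
    assume h: "Z m a e \<noteq> 0"
    have "P m \<noteq> 0" using h by (auto simp: Z_def)
    moreover have "Q (j - m + int a + int e) \<noteq> 0" using h by (auto simp: Z_def)
    ultimately show ?thesis using bndD[OF P] bndD[OF Q] by blast
  qed
  define WL where "WL x e c = sga (j + int (snd x) + int c) * ib (j + int (snd x) + int c) (snd x + c)
      * of_nat ((snd x + c) choose (snd x)) * ib (fst x) (e - c) * Z (fst x) (snd x) e"
    for x :: "int \<times> nat" and e c :: nat
  define WR where "WR x a c = ib (j - fst x + int a) c * sga (j - fst x + int a + int (snd x)) * ib (j - fst x + int a + int (snd x)) (snd x)
      * sga (fst x) * ib (fst x) (a - c) * Z (fst x) a (snd x)"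
    for x :: "int \<times> nat" and a c :: nat
  define BX where "BX = ({j-N..N} \<times> {..nat (2*N-j)}) \<times> ({..nat (2*N-j)} \<times> {..nat (2*N-j)})"
  have fBX: "finite BX" by (simp add: BX_def)
  define YL where "YL t y a = (if a \<le> t then sga (j + int t) * ib (j + int t) t * (ib (fst y) (snd y) *
      (of_nat (t choose a) * D a (P (fst y)) * D (t - a + snd y) (Q (j + int t - fst y + int (snd y))))) else 0)"
    for t :: nat and y :: "int \<times> nat" and a :: nat
  have YLnz: "YL t y a \<noteq> 0 \<Longrightarrow> a \<le> t \<and> fst y \<le> N \<and> j + int t - fst y + int (snd y) \<le> N" for t y a
  proof -
    assume h: "YL t y a \<noteq> 0"
    have "a \<le> t" using h by (auto simp: YL_def split: if_splits)
    moreover have "P (fst y) \<noteq> 0" using h by (auto simp: YL_def split: if_splits)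
    moreover have "Q (j + int t - fst y + int (snd y)) \<noteq> 0" using h by (auto simp: YL_def split: if_splits)
    ultimately show ?thesis using bndD[OF P] bndD[OF Q] by blast
  qed
  have stepL: "sga (j + int t) * ib (j + int t) t * D t (pm P Q (j + int t)) = Sum_any (\<lambda>y. Sum_any (\<lambda>a. YL t y a))" for t
  proof -
    let ?s = "j + int t"
    let ?c = "sga (j + int t) * ib (j + int t) t :: 'a"
    let ?F = "\<lambda>y. ib (fst y) (snd y) * (\<Sum>a\<le>t. of_nat (t choose a) * D a (P (fst y)) * D (t - a + snd y) (Q (?s - fst y + int (snd y))))"
    have fin1: "finite {y. ib (fst y) (snd y) * P (fst y) * D (snd y) (Q (?s - fst y + int (snd y))) \<noteq> 0}"
      by (rule pm_fin[OF P Q])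
    have eqF: "D t (ib (fst y) (snd y) * P (fst y) * D (snd y) (Q (?s - fst y + int (snd y)))) = ?F y" for y
    proof -
      have "D t (ib (fst y) (snd y) * P (fst y) * D (snd y) (Q (?s - fst y + int (snd y))))
          = ib (fst y) (snd y) * D t (P (fst y) * D (snd y) (Q (?s - fst y + int (snd y))))"
        by (simp only: mult.assoc ib_def D_of_int_mult)
      also have "\<dots> = ?F y" by (simp only: leibniz D_D)
      finally show ?thesis .
    qed
    have "D t (pm P Q ?s) = Sum_any (\<lambda>y. D t (ib (fst y) (snd y) * P (fst y) * D (snd y) (Q (?s - fst y + int (snd y)))))"
      unfolding pm_def by (rule D_Sum_any[OF fin1])
    also have "\<dots> = Sum_any ?F" by (simp only: eqF)
    finally have e1: "D t (pm P Q ?s) = Sum_any ?F" .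
    have finF: "finite {y. ?F y \<noteq> 0}"
    proof (rule finite_subset[OF _ fin1], rule subsetI, rule CollectI)
      fix y assume "y \<in> {y. ?F y \<noteq> 0}"
      then have "?F y \<noteq> 0" by simp
      then show "ib (fst y) (snd y) * P (fst y) * D (snd y) (Q (?s - fst y + int (snd y))) \<noteq> 0"
        by (metis eqF D_0)
    qed
    have "?c * D t (pm P Q ?s) = Sum_any (\<lambda>y. ?c * ?F y)"
      unfolding e1 by (rule Sum_any_right_distrib[OF finF])
    also have "\<dots> = Sum_any (\<lambda>y. Sum_any (\<lambda>a. YL t y a))"
    proof (rule Sum_any.cong)
      fix y
      have "?c * ?F y = (\<Sum>a\<le>t. ?c * (ib (fst y) (snd y) * (of_nat (t choose a) * D a (P (fst y)) * D (t - a + snd y) (Q (?s - fst y + int (snd y))))))"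
        by (simp add: sum_distrib_left)
      also have "\<dots> = Sum_any (\<lambda>a. YL t y a)"
        by (subst Sum_any.conditionalize) (auto simp: YL_def algebra_simps intro!: Sum_any.cong)
      finally show "?c * ?F y = Sum_any (\<lambda>a. YL t y a)" .
    qed
    finally show ?thesis .
  qed
  define gL where "gL w = (if snd (snd w) \<le> fst (snd w) then (snd (fst w) + snd (snd w), ((fst (fst w), fst (snd w) - snd (snd w)), snd (fst w)))
      else (0, ((fst (fst w), 0), 1)))" for w :: "(int \<times> nat) \<times> (nat \<times> nat)"
  have "pa (pm P Q) j = Sum_any (\<lambda>t. sga (j + int t) * ib (j + int t) t * D t (pm P Q (j + int t)))"
    by (simp add: pa_def)
  also have "\<dots> = Sum_any (\<lambda>t. Sum_any (\<lambda>y. Sum_any (\<lambda>a. YL t y a)))" by (simp only: stepL)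
  also have "\<dots> = Sum_any (\<lambda>z. YL (fst z) (fst (snd z)) (snd (snd z)))"
  proof (rule Sum_any_triple, rule finite_supp_sub[of "{..nat (2*N-j)} \<times> (({j-N..N} \<times> {..nat (2*N-j)}) \<times> {..nat (2*N-j)})"])
    fix z :: "nat \<times> ((int \<times> nat) \<times> nat)"
    assume "YL (fst z) (fst (snd z)) (snd (snd z)) \<noteq> 0"
    from YLnz[OF this] show "z \<in> {..nat (2*N-j)} \<times> (({j-N..N} \<times> {..nat (2*N-j)}) \<times> {..nat (2*N-j)})"
      using arL by (metis prod.collapse)
  qed simp
  also have "\<dots> = Sum_any (\<lambda>w. YL (fst (gL w)) (fst (snd (gL w))) (snd (snd (gL w))))"
  proof (rule Sum_any_reindex_inj_on)
    show "inj_on gL {w. YL (fst (gL w)) (fst (snd (gL w))) (snd (snd (gL w))) \<noteq> 0}"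
    proof (rule inj_onI)
      fix z1 z2 assume a1: "z1 \<in> {w. YL (fst (gL w)) (fst (snd (gL w))) (snd (snd (gL w))) \<noteq> 0}"
        and a2: "z2 \<in> {w. YL (fst (gL w)) (fst (snd (gL w))) (snd (snd (gL w))) \<noteq> 0}" and e: "gL z1 = gL z2"
      have c1: "snd (snd z1) \<le> fst (snd z1)" using a1 by (auto simp: gL_def YL_def split: if_splits)
      have c2: "snd (snd z2) \<le> fst (snd z2)" using a2 by (auto simp: gL_def YL_def split: if_splits)
      have "snd (fst z1) + snd (snd z1) = snd (fst z2) + snd (snd z2) \<and> fst (fst z1) = fst (fst z2) \<and>
          fst (snd z1) - snd (snd z1) = fst (snd z2) - snd (snd z2) \<and> snd (fst z1) = snd (fst z2)"
        using e c1 c2 by (simp add: gL_def)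
      then show "z1 = z2" using c1 c2 by (auto simp: prod_eq_iff)
    qed
  next
    show "{w. YL (fst w) (fst (snd w)) (snd (snd w)) \<noteq> 0} \<subseteq> range gL"
    proof
      fix w assume "w \<in> {w. YL (fst w) (fst (snd w)) (snd (snd w)) \<noteq> 0}"
      then have a: "snd (snd w) \<le> fst w" using YLnz by auto
      have "w = gL ((fst (fst (snd w)), snd (snd w)), (snd (fst (snd w)) + (fst w - snd (snd w)), fst w - snd (snd w)))"
        using a by (simp add: gL_def prod_eq_iff)
      then show "w \<in> range gL" by blast
    qed
  qed
  also have "\<dots> = Sum_any (\<lambda>w. if snd (snd w) \<le> fst (snd w) then WL (fst w) (fst (snd w)) (snd (snd w)) else 0)"
  proof (rule Sum_any.cong)
    fix w :: "(int \<times> nat) \<times> (nat \<times> nat)"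
    obtain m a e c where w: "w = ((m,a),(e,c))" by (metis prod.collapse)
    show "YL (fst (gL w)) (fst (snd (gL w))) (snd (snd (gL w))) = (if snd (snd w) \<le> fst (snd w) then WL (fst w) (fst (snd w)) (snd (snd w)) else 0)"
    proof (cases "c \<le> e")
      case True
      have e1: "a + c - a + (e - c) = e" using True by simp
      have e2: "j + int (a + c) - m + int (e - c) = j - m + int a + int e" using True by simp
      have "YL (fst (gL w)) (fst (snd (gL w))) (snd (snd (gL w))) = sga (j + int (a + c)) * ib (j + int (a+c)) (a+c) *
          (ib m (e - c) * (of_nat ((a+c) choose a) * D a (P m) * D (a + c - a + (e - c)) (Q (j + int (a + c) - m + int (e - c)))))"
        using True by (simp add: w gL_def YL_def)
      also have "\<dots> = sga (j + int (a + c)) * ib (j + int (a+c)) (a+c) *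
          (ib m (e - c) * (of_nat ((a+c) choose a) * D a (P m) * D e (Q (j - m + int a + int e))))"
        by (simp only: e1 e2)
      also have "\<dots> = WL (fst w) (fst (snd w)) (snd (snd w))" by (simp add: w WL_def Z_def mult_ac add.assoc)
      finally show ?thesis using True by (simp add: w)
    next
      case False
      then show ?thesis by (simp add: w gL_def YL_def)
    qed
  qed
  also have "\<dots> = Sum_any (\<lambda>p. \<Sum>c\<le>snd p. WL (fst p) (snd p) c)"
  proof (rule Sum_any_pair_sum[where h = "\<lambda>e. e", symmetric], rule finite_supp_sub[OF fBX])
    fix z :: "(int \<times> nat) \<times> (nat \<times> nat)"
    assume "(if snd (snd z) \<le> fst (snd z) then WL (fst z) (fst (snd z)) (snd (snd z)) else 0) \<noteq> 0"
    then have h: "snd (snd z) \<le> fst (snd z)" "Z (fst (fst z)) (snd (fst z)) (fst (snd z)) \<noteq> 0"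
      by (auto simp: WL_def split: if_splits)
    obtain m a e c where z: "z = ((m,a),(e,c))" by (metis prod.collapse)
    show "z \<in> BX" using h Znz[of m a e] arT[of m N j a e c] unfolding BX_def z by simp
  qed
  finally have L: "pa (pm P Q) j = Sum_any (\<lambda>p. \<Sum>c\<le>snd p. WL (fst p) (snd p) c)" .
  define YR where "YR y r u = ib (fst y) (snd y) * (sga (fst y + int r) * ib (fst y + int r) r * D r (Q (fst y + int r)))
      * (sga (j - fst y + int (snd y) + int u) * ib (j - fst y + int (snd y) + int u) u * D (snd y + u) (P (j - fst y + int (snd y) + int u)))"
    for y :: "int \<times> nat" and r u :: nat
  have YRnz: "YR y r u \<noteq> 0 \<Longrightarrow> fst y + int r \<le> N \<and> j - fst y + int (snd y) + int u \<le> N" for y r u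
  proof -
    assume h: "YR y r u \<noteq> 0"
    have "Q (fst y + int r) \<noteq> 0" using h by (auto simp: YR_def)
    moreover have "P (j - fst y + int (snd y) + int u) \<noteq> 0" using h by (auto simp: YR_def)
    ultimately show ?thesis using bndD[OF P] bndD[OF Q] by blast
  qed
  have stepR: "ib (fst y) (snd y) * pa Q (fst y) * D (snd y) (pa P (j - fst y + int (snd y))) = Sum_any (\<lambda>r. Sum_any (\<lambda>u. YR y r u))" for y
  proof -
    let ?s = "j - fst y + int (snd y)"
    have fQ: "finite {k. sga (fst y + int k) * ib (fst y + int k) k * D k (Q (fst y + int k)) \<noteq> 0}" by (rule pa_fin[OF Q])
    have fP: "finite {k. sga (?s + int k) * ib (?s + int k) k * D k (P (?s + int k)) \<noteq> 0}" by (rule pa_fin[OF P])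
    have eP: "D (snd y) (sga (?s + int u) * ib (?s + int u) u * D u (P (?s + int u))) = sga (?s + int u) * ib (?s + int u) u * D (snd y + u) (P (?s + int u))" for u
    proof -
      have "sga (?s + int u) * ib (?s + int u) u = (of_int (sg (?s + int u) * ibinom (?s + int u) u) :: 'a)"
        by (simp add: sga_def ib_def)
      then show ?thesis by (simp only: D_of_int_mult D_D mult.assoc)
    qed
    have fP2: "finite {u. sga (?s + int u) * ib (?s + int u) u * D (snd y + u) (P (?s + int u)) \<noteq> 0}"
      by (rule finite_subset[OF _ fP]) (auto simp flip: eP)
    have "D (snd y) (pa P ?s) = Sum_any (\<lambda>u. sga (?s + int u) * ib (?s + int u) u * D (snd y + u) (P (?s + int u)))"
      unfolding pa_def by (subst D_Sum_any[OF fP]) (simp only: eP)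
    then have "ib (fst y) (snd y) * pa Q (fst y) * D (snd y) (pa P ?s)
       = ib (fst y) (snd y) * Sum_any (\<lambda>r. sga (fst y + int r) * ib (fst y + int r) r * D r (Q (fst y + int r)))
         * Sum_any (\<lambda>u. sga (?s + int u) * ib (?s + int u) u * D (snd y + u) (P (?s + int u)))"
      by (simp add: pa_def)
    also have "\<dots> = Sum_any (\<lambda>r. Sum_any (\<lambda>u. YR y r u))"
    proof -
      define A where "A r = sga (fst y + int r) * ib (fst y + int r) r * D r (Q (fst y + int r))" for r
      define B where "B u = sga (?s + int u) * ib (?s + int u) u * D (snd y + u) (P (?s + int u))" for u
      let ?c = "ib (fst y) (snd y) :: 'a"
      have fA: "finite {r. A r \<noteq> 0}" using fQ by (simp add: A_def)
      have fB: "finite {u. B u \<noteq> 0}" using fP2 by (simp add: B_def)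
      have fr: "finite {r. Sum_any (\<lambda>u. A r * B u) \<noteq> 0}"
        by (rule finite_subset[OF _ fA]) auto
      have fu: "finite {u. A r * B u \<noteq> 0}" for r
        by (rule finite_subset[OF _ fB]) auto
      have "?c * Sum_any A * Sum_any B = ?c * Sum_any (\<lambda>r. Sum_any (\<lambda>u. A r * B u))"
        by (simp add: mult.assoc Sum_any_product[OF fA fB])
      also have "\<dots> = Sum_any (\<lambda>r. ?c * Sum_any (\<lambda>u. A r * B u))"
        by (rule Sum_any_right_distrib[OF fr])
      also have "\<dots> = Sum_any (\<lambda>r. Sum_any (\<lambda>u. ?c * (A r * B u)))"
        by (simp only: Sum_any_right_distrib[OF fu])
      also have "\<dots> = Sum_any (\<lambda>r. Sum_any (\<lambda>u. YR y r u))"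
        by (simp add: YR_def A_def B_def mult.assoc)
      finally show ?thesis by (simp add: A_def B_def)
    qed
    finally show ?thesis .
  qed
  define hR where "hR z = ((j - fst (fst z) + int (snd (fst z)) + int (snd (snd z)), fst (snd z)), (snd (fst z) + snd (snd z), snd (fst z)))"
    for z :: "(int \<times> nat) \<times> (nat \<times> nat)"
  define TR where "TR w = (if snd (snd w) \<le> fst (snd w) then WR (fst w) (fst (snd w)) (snd (snd w)) else 0)"
    for w :: "(int \<times> nat) \<times> (nat \<times> nat)"
  have "pm (pa Q) (pa P) j = Sum_any (\<lambda>y. ib (fst y) (snd y) * pa Q (fst y) * D (snd y) (pa P (j - fst y + int (snd y))))"
    by (simp add: pm_def)
  also have "\<dots> = Sum_any (\<lambda>y. Sum_any (\<lambda>r. Sum_any (\<lambda>u. YR y r u)))" by (simp only: stepR)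
  also have "\<dots> = Sum_any (\<lambda>z. YR (fst z) (fst (snd z)) (snd (snd z)))"
  proof (rule Sum_any_triple, rule finite_supp_sub[OF fBX])
    fix z :: "(int \<times> nat) \<times> (nat \<times> nat)"
    assume "YR (fst z) (fst (snd z)) (snd (snd z)) \<noteq> 0"
    from YRnz[OF this] show "z \<in> BX" using arR unfolding BX_def by (metis prod.collapse)
  qed
  also have "\<dots> = Sum_any (\<lambda>z. TR (hR z))"
  proof (rule Sum_any.cong)
    fix z :: "(int \<times> nat) \<times> (nat \<times> nat)"
    obtain n l r u where z: "z = ((n,l),(r,u))" by (metis prod.collapse)
    show "YR (fst z) (fst (snd z)) (snd (snd z)) = TR (hR z)"
      by (simp add: z hR_def TR_def WR_def YR_def Z_def mult_ac)
  qed
  also have "\<dots> = Sum_any TR"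
  proof (rule Sum_any_reindex_inj[symmetric])
    show "inj hR" by (auto simp: inj_def hR_def prod_eq_iff)
  next
    show "{x. TR x \<noteq> 0} \<subseteq> range hR"
    proof
      fix w assume "w \<in> {x. TR x \<noteq> 0}"
      then have a: "snd (snd w) \<le> fst (snd w)" by (auto simp: TR_def split: if_splits)
      have "w = hR ((j - fst (fst w) + int (fst (snd w)), snd (snd w)), (snd (fst w), fst (snd w) - snd (snd w)))"
        using a by (simp add: hR_def prod_eq_iff)
      then show "w \<in> range hR" by blast
    qed
  qed
  also have "\<dots> = Sum_any (\<lambda>p. \<Sum>c\<le>snd p. WR (fst p) (snd p) c)"
  proof (unfold TR_def, rule Sum_any_pair_sum[where h = "\<lambda>a. a", symmetric], rule finite_supp_sub[OF fBX])
    fix z :: "(int \<times> nat) \<times> (nat \<times> nat)"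
    assume "(if snd (snd z) \<le> fst (snd z) then WR (fst z) (fst (snd z)) (snd (snd z)) else 0) \<noteq> 0"
    then have h: "snd (snd z) \<le> fst (snd z)" "Z (fst (fst z)) (fst (snd z)) (snd (fst z)) \<noteq> 0"
      by (auto simp: WR_def split: if_splits)
    obtain m e a c where z: "z = ((m,e),(a,c))" by (metis prod.collapse)
    have "((m,a),(e,c)) \<in> BX" using h Znz[of m a e] arT[of m N j a e c] unfolding BX_def z by simp
    then show "z \<in> BX" unfolding BX_def z by auto
  qed
  also have "\<dots> = Sum_any (\<lambda>p. \<Sum>c\<le>snd (fst p). WR (fst (fst p), snd p) (snd (fst p)) c)"
  proof (rule Sum_any.reindex_cong[where l = "\<lambda>p. ((fst (fst p), snd p), snd (fst p))"])
    show "bij (\<lambda>p::(int\<times>nat)\<times>nat. ((fst (fst p), snd p), snd (fst p)))"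
      by (rule bij_betw_byWitness[where f' = "\<lambda>p. ((fst (fst p), snd p), snd (fst p))"]) auto
  qed (simp add: comp_def)
  also have "\<dots> = Sum_any (\<lambda>p. \<Sum>c\<le>snd p. WL (fst p) (snd p) c)"
  proof (rule Sum_any.cong)
    fix p :: "(int \<times> nat) \<times> nat"
    obtain m a e where p: "p = ((m,a),e)" by (metis prod.collapse)
    have "(\<Sum>c\<le>e. WL (m,a) e c) = (\<Sum>c\<le>e. sga (j+int a+int c) * ib (j+int a+int c) (a+c) * of_nat ((a+c) choose a) * ib m (e-c)) * Z m a e"
      by (simp add: WL_def sum_distrib_right add.assoc)
    also have "\<dots> = sga (j - m + int a + int e) * sga m * ib (j-m+int a+int e) e *
      (\<Sum>c\<le>a. ib (j-m+int a) c * ib m (a-c)) * Z m a e" by (simp only: ib_adj)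
    also have "\<dots> = (\<Sum>c\<le>a. WR (m,e) a c)"
      by (simp add: WR_def sum_distrib_left sum_distrib_right mult_ac)
    finally show "(\<Sum>c\<le>snd (fst p). WR (fst (fst p), snd p) (snd (fst p)) c) = (\<Sum>c\<le>snd p. WL (fst p) (snd p) c)"
      by (simp add: p)
  qed
  finally have RR: "pm (pa Q) (pa P) j = Sum_any (\<lambda>p. \<Sum>c\<le>snd p. WL (fst p) (snd p) c)" .
  show ?thesis using L RR by simp
qed

end


definition psc :: "'a::comm_ring_1 \<Rightarrow> (int \<Rightarrow> 'a) \<Rightarrow> int \<Rightarrow> 'a" where "psc s P = (\<lambda>j. s * P j)"

lemma bnd_pdpow: "m \<le> N \<Longrightarrow> bnd N (pdpow m)" by (simp add: bnd_def pdpow_def)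
lemma bnd_pconst: "0 \<le> N \<Longrightarrow> bnd N (pconst a)" by (simp add: bnd_def pconst_def)
lemma bnd_padd: "bnd N P \<Longrightarrow> bnd N Q \<Longrightarrow> bnd N (padd P (Q :: int \<Rightarrow> 'a::monoid_add))" by (auto simp: bnd_def padd_def)
lemma bnd_psc: "bnd N P \<Longrightarrow> bnd N (psc s P)" by (simp add: bnd_def psc_def)
lemma bnd_pplus: "bnd N P \<Longrightarrow> bnd N (pplus P)" by (simp add: bnd_def pplus_def)
lemma psc_psc: "psc s (psc t P) = psc (s*t) P" by (simp add: psc_def mult.assoc)
lemma psc_1: "psc 1 P = P" by (simp add: psc_def)

lemma sga_add: "sga x * sga y = (sga (x + y) :: 'a::comm_ring_1)"
  by (simp add: sga_def sg_add)
lemma sga_0: "sga 0 = 1" by (simp add: sga_def sg_def)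
lemma sga_sq: "sga x * sga x = (1 :: 'a::comm_ring_1)"
  by (simp add: sga_def flip: of_int_mult) (simp add: sg_sq)
lemma sga_m1: "sga (-1) = (-1 :: 'a::comm_ring_1)" by (simp add: sga_def sg_def)
lemma sga_even: "even z \<Longrightarrow> sga z = 1" by (simp add: sga_def sg_def)
lemma sga_odd: "odd z \<Longrightarrow> sga z = -1" by (simp add: sga_def sg_def)
lemma ib_0: "ib m 0 = 1" by (simp add: ib_def ibinom_def)
lemma ib_0k: "ib 0 k = (if k = 0 then 1 else 0)" by (cases k) (simp_all add: ib_def ibinom_def)

context der begin

lemma pm_assoc':
  assumes "bnd A P" "bnd B Q" "bnd C R"
  shows "pm (pm P Q) R = pm P (pm Q R)"
proof
  fix j
  let ?N = "max A (max B C)"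
  show "pm (pm P Q) R j = pm P (pm Q R) j"
    by (rule pm_assoc[where N = ?N]) (use assms in \<open>auto intro: bnd_mono\<close>)
qed

lemma pm_pdpow_right: "pm P (pdpow c) j = P (j - c)"
proof -
  have "pm P (pdpow c) j = Sum_any (\<lambda>p. if p = (j - c, 0::nat) then P (j - c) else 0)"
    unfolding pm_def
  proof (rule Sum_any.cong)
    fix p :: "int \<times> nat"
    show "ib (fst p) (snd p) * P (fst p) * D (snd p) (pdpow c (j - fst p + int (snd p))) = (if p = (j - c, 0::nat) then P (j - c) else 0)"
      by (cases p) (auto simp: pdpow_def D_1 ib_0)
  qed
  also have "\<dots> = P (j - c)" by simp
  finally show ?thesis .
qed

lemma pm_pdpow_pdpow: "pm (pdpow a) (pdpow b) = pdpow (a + b)"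
proof
  fix j show "pm (pdpow a) (pdpow b) j = pdpow (a + b) j"
    by (simp only: pm_pdpow_right) (simp add: pdpow_def)
qed

lemma pm_unit_left: "pm (pdpow 0) Q j = Q j"
proof -
  have "pm (pdpow 0) Q j = Sum_any (\<lambda>p. if p = (0::int, 0::nat) then Q j else 0)"
    unfolding pm_def
  proof (rule Sum_any.cong)
    fix p :: "int \<times> nat"
    show "ib (fst p) (snd p) * pdpow 0 (fst p) * D (snd p) (Q (j - fst p + int (snd p))) = (if p = (0::int, 0::nat) then Q j else 0)"
      by (cases p) (auto simp: pdpow_def ib_0k)
  qed
  also have "\<dots> = Q j" by simp
  finally show ?thesis .
qed

lemma pm_unit_right: "pm P (pdpow 0) = P"
  by (rule ext) (simp add: pm_pdpow_right)

lemma pm_psc_left: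
  assumes "bnd N P" "bnd M Q"
  shows "pm (psc s P) Q = psc s (pm P Q)"
proof
  fix j
  have "pm (psc s P) Q j = Sum_any (\<lambda>p. s * (ib (fst p) (snd p) * P (fst p) * D (snd p) (Q (j - fst p + int (snd p)))))"
    unfolding pm_def psc_def by (simp add: mult_ac)
  also have "\<dots> = s * pm P Q j"
    unfolding pm_def by (rule Sum_any_right_distrib[OF pm_fin[OF assms], symmetric])
  finally show "pm (psc s P) Q j = psc s (pm P Q) j" by (simp add: psc_def)
qed

lemma pm_psc_right:
  assumes "bnd N P" "bnd M Q"
  shows "pm P (psc (of_int z) Q) = psc (of_int z) (pm P Q)"
proof
  fix j
  have "pm P (psc (of_int z) Q) j = Sum_any (\<lambda>p. of_int z * (ib (fst p) (snd p) * P (fst p) * D (snd p) (Q (j - fst p + int (snd p)))))"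
    unfolding pm_def psc_def by (simp add: D_of_int_mult mult_ac)
  also have "\<dots> = of_int z * pm P Q j"
    unfolding pm_def by (rule Sum_any_right_distrib[OF pm_fin[OF assms], symmetric])
  finally show "pm P (psc (of_int z) Q) j = psc (of_int z) (pm P Q) j" by (simp add: psc_def)
qed

lemma pa_psc:
  assumes "bnd N P"
  shows "pa (psc (of_int z) P) = psc (of_int z) (pa P)"
proof
  fix j
  have "pa (psc (of_int z) P) j = Sum_any (\<lambda>k. of_int z * (sga (j + int k) * ib (j + int k) k * D k (P (j + int k))))"
    unfolding pa_def psc_def by (simp add: D_of_int_mult mult_ac)
  also have "\<dots> = of_int z * pa P j"
    unfolding pa_def by (rule Sum_any_right_distrib[OF pa_fin[OF assms], symmetric])
  finally show "pa (psc (of_int z) P) j = psc (of_int z) (pa P) j" by (simp add: psc_def)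
qed

lemma pa_pdpow: "pa (pdpow m) = psc (sga m) (pdpow m)"
proof
  fix j
  have "pa (pdpow m) j = Sum_any (\<lambda>k. if k = (0::nat) then (if j = m then sga m else 0) else 0)"
    unfolding pa_def
  proof (rule Sum_any.cong)
    fix k :: nat
    show "sga (j + int k) * ib (j + int k) k * D k (pdpow m (j + int k)) = (if k = 0 then (if j = m then sga m else 0) else 0)"
      by (auto simp: pdpow_def D_1 ib_0)
  qed
  also have "\<dots> = (if j = m then sga m else 0)" by simp
  finally show "pa (pdpow m) j = psc (sga m) (pdpow m) j" by (simp add: psc_def pdpow_def)
qed

lemma pa_pconst: "pa (pconst v) = pconst v"
proof
  fix j
  have "pa (pconst v) j = Sum_any (\<lambda>k. if k = (0::nat) then (if j = 0 then v else 0) else 0)"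
    unfolding pa_def
  proof (rule Sum_any.cong)
    fix k :: nat
    show "sga (j + int k) * ib (j + int k) k * D k (pconst v (j + int k)) = (if k = 0 then (if j = 0 then v else 0) else 0)"
      by (auto simp: pconst_def ib_0k sga_0)
  qed
  also have "\<dots> = pconst v j" by (simp add: pconst_def)
  finally show "pa (pconst v) j = pconst v j" .
qed

lemma pa_padd:
  assumes "bnd N P" "bnd N Q"
  shows "pa (padd P Q) = padd (pa P) (pa Q)"
proof
  fix j
  show "pa (padd P Q) j = padd (pa P) (pa Q) j"
    unfolding pa_def padd_def
    by (simp add: D_add distrib_left Sum_any.distrib[OF pa_fin[OF assms(1)] pa_fin[OF assms(2)]])
qed

lemma pa_local: "(\<And>i. i \<ge> j \<Longrightarrow> P i = Q i) \<Longrightarrow> pa P j = pa Q j"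
  unfolding pa_def by (rule Sum_any.cong) simp

lemma pa_sum:
  assumes "finite A" "\<And>k. k \<in> A \<Longrightarrow> bnd N (G k)"
  shows "pa (\<lambda>i. \<Sum>k\<in>A. G k i) j = (\<Sum>k\<in>A. pa (G k) j)"
proof -
  have "pa (\<lambda>i. \<Sum>k\<in>A. G k i) j = Sum_any (\<lambda>t. \<Sum>k\<in>A. sga (j + int t) * ib (j + int t) t * D t (G k (j + int t)))"
    unfolding pa_def by (simp add: D_sum sum_distrib_left)
  also have "\<dots> = (\<Sum>k\<in>A. pa (G k) j)"
    unfolding pa_def by (rule Sum_any_sum[OF assms(1)]) (rule pa_fin[OF assms(2)])
  finally show ?thesis .
qed

lemma pa_pplus:
  assumes "bnd N P"
  shows "pa (pplus P) = pplus (pa P)"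
proof
  fix j
  show "pa (pplus P) j = pplus (pa P) j"
  proof (cases "0 \<le> j")
    case True
    then have "pa (pplus P) j = pa P j" by (intro pa_local) (simp add: pplus_def)
    then show ?thesis using True by (simp add: pplus_def)
  next
    case False
    have "pa (pplus P) j = Sum_any (\<lambda>k::nat. 0)"
      unfolding pa_def
    proof (rule Sum_any.cong)
      fix k :: nat
      show "sga (j + int k) * ib (j + int k) k * D k (pplus P (j + int k)) = 0"
        using False by (auto simp: pplus_def ib_def ibinom_nonneg_gt)
    qed
    then show ?thesis using False by (simp add: pplus_def)
  qed
qed

lemma pa_m1:
  assumes "bnd N P"
  shows "pa P (-1) = - P (-1)"
proof -
  have "pa P (-1) = Sum_any (\<lambda>k. if k = (0::nat) then - P (-1) else 0)"
    unfolding pa_def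
  proof (rule Sum_any.cong)
    fix k :: nat
    show "sga (-1 + int k) * ib (-1 + int k) k * D k (P (-1 + int k)) = (if k = 0 then - P (-1) else 0)"
      by (cases k) (simp add: ib_0 sga_m1, simp add: ib_def ibinom_nonneg_gt)
  qed
  also have "\<dots> = - P (-1)" by simp
  finally show ?thesis .
qed

end


lemma ps_pdpow[simp]: "is_psdo (pdpow m)" using bnd_pdpow[of m m] by (auto simp: is_psdo_bnd)
lemma ps_pconst[simp]: "is_psdo (pconst a)" using bnd_pconst[of 0 a] by (auto simp: is_psdo_bnd)
lemma ps_psc[simp]: "is_psdo P \<Longrightarrow> is_psdo (psc s P)" using bnd_psc by (auto simp: is_psdo_bnd)
lemma ps_pplus[simp]: "is_psdo P \<Longrightarrow> is_psdo (pplus P)" using bnd_pplus by (auto simp: is_psdo_bnd)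

lemma ps_padd[simp]:
  fixes P Q :: "int \<Rightarrow> 'a::monoid_add"
  shows "is_psdo P \<Longrightarrow> is_psdo Q \<Longrightarrow> is_psdo (padd P Q)"
proof -
  assume "is_psdo P" "is_psdo Q"
  then obtain N M where "bnd N P" "bnd M Q" by (auto simp: is_psdo_bnd)
  then have "bnd (max N M) P" "bnd (max N M) Q" by (auto intro: bnd_mono)
  then show ?thesis using bnd_padd by (auto simp: is_psdo_bnd)
qed

lemma sga_int_Suc: "sga (-1) * sga (int n) = (sga (int (Suc n)) :: 'a::comm_ring_1)"
  by (simp add: sga_def sg_def)

context der begin

lemma ps_pm[simp]: "is_psdo P \<Longrightarrow> is_psdo Q \<Longrightarrow> is_psdo (pm P Q)"
proof -
  assume "is_psdo P" "is_psdo Q"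
  then obtain N M where "bnd N P" "bnd M Q" by (auto simp: is_psdo_bnd)
  from bnd_pm[OF this] show ?thesis by (auto simp: is_psdo_bnd)
qed
lemma ps_pa[simp]: "is_psdo P \<Longrightarrow> is_psdo (pa P)"
proof -
  assume "is_psdo P"
  then obtain N where "bnd N P" by (auto simp: is_psdo_bnd)
  from bnd_pa[OF this] show ?thesis by (auto simp: is_psdo_bnd)
qed

lemma assoc2: "is_psdo P \<Longrightarrow> is_psdo Q \<Longrightarrow> is_psdo R \<Longrightarrow> pm (pm P Q) R = pm P (pm Q R)"
  by (auto simp: is_psdo_bnd intro: pm_assoc')

lemma pscL: "is_psdo P \<Longrightarrow> is_psdo Q \<Longrightarrow> pm (psc s P) Q = psc s (pm P Q)"
  by (auto simp: is_psdo_bnd intro: pm_psc_left)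
lemma pscR: "is_psdo P \<Longrightarrow> is_psdo Q \<Longrightarrow> pm P (psc (of_int z) Q) = psc (of_int z) (pm P Q)"
  by (auto simp: is_psdo_bnd intro: pm_psc_right)
lemma pscR': "is_psdo P \<Longrightarrow> is_psdo Q \<Longrightarrow> pm P (psc (sga z) Q) = psc (sga z) (pm P Q)"
  unfolding sga_def by (rule pscR)
lemma pa_psc': "is_psdo P \<Longrightarrow> pa (psc (sga z) P) = psc (sga z) (pa P)"
  unfolding sga_def by (auto simp: is_psdo_bnd intro: pa_psc)

lemma pa_mult2: "is_psdo P \<Longrightarrow> is_psdo Q \<Longrightarrow> pa (pm P Q) = pm (pa Q) (pa P)"
proof -
  assume "is_psdo P" "is_psdo Q"
  then obtain N M where "bnd N P" "bnd M Q" by (auto simp: is_psdo_bnd)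
  then have "bnd (max N M) P" "bnd (max N M) Q" by (auto intro: bnd_mono)
  then show ?thesis by (intro ext pa_mult)
qed

lemma pm_unit_left': "pm (pdpow 0) Q = Q" by (rule ext) (rule pm_unit_left)

lemma pa_psum:
  assumes b: "\<And>k. bnd (-2 * int k) (F k)" and s: "\<And>k. pa (F k) = F k"
  shows "pa (psum F) = psum F"
proof
  fix j
  define K where "K = Suc (nat (- j))"
  define S where "S i = (\<Sum>k<K. F k i)" for i
  have b0: "bnd 0 (F k)" for k using b[of k] by (rule bnd_mono) simp
  have agree: "psum F i = S i" if "i \<ge> j" for i
  proof -
    have sub: "{k. F k i \<noteq> 0} \<subseteq> {..<K}"
    proof
      fix k assume "k \<in> {k. F k i \<noteq> 0}"
      then have "i \<le> -2 * int k" using bndD[OF b[of k]] by auto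
      then show "k \<in> {..<K}" using that by (auto simp: K_def)
    qed
    have "psum F i = Sum_any (\<lambda>k. F k i)" by (simp add: psum_def Sum_any.expand_set)
    also have "\<dots> = S i" unfolding S_def by (rule Sum_any.expand_superset) (use sub in auto)
    finally show ?thesis .
  qed
  have "pa (psum F) j = pa S j" by (rule pa_local) (simp add: agree)
  also have "\<dots> = (\<Sum>k<K. pa (F k) j)" unfolding S_def by (rule pa_sum) (auto intro: b0)
  also have "\<dots> = S j" by (simp add: s S_def)
  also have "\<dots> = psum F j" by (simp add: agree)
  finally show "pa (psum F) j = psum F j" .
qed

lemma bnd_psum: "(\<And>k. bnd 0 (F k)) \<Longrightarrow> bnd 0 (psum F)"
  unfolding bnd_def psum_def by simp

context
  fixes v :: "nat \<Rightarrow> 'a"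
begin

definition Fp :: "nat \<Rightarrow> int \<Rightarrow> 'a" where
  "Fp = (\<lambda>k. if k = 0 then (\<lambda>_. 0) else pmult d (pmult d (pdpow (- int k)) (pconst (v k))) (pdpow (- int k)))"
definition TT :: "int \<Rightarrow> 'a" where
  "TT = padd (padd (pdpow 2) (pconst (v 0))) (psum Fp)"
definition LL :: "int \<Rightarrow> 'a" where "LL = pm (pdpow (-1)) TT"

lemma Fp_eq: "k \<noteq> 0 \<Longrightarrow> Fp k = pm (pm (pdpow (- int k)) (pconst (v k))) (pdpow (- int k))"
proof -
  assume k: "k \<noteq> 0"
  have b1: "bnd (- int k) (pdpow (- int k))" by (rule bnd_pdpow) simp
  have b2: "bnd 0 (pconst (v k))" by (rule bnd_pconst) simp
  have e1: "pmult d (pdpow (- int k)) (pconst (v k)) = pm (pdpow (- int k)) (pconst (v k))" by (rule pmult_eq[OF b1 b2])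
  have b3: "bnd (- int k + 0) (pm (pdpow (- int k)) (pconst (v k)))" by (rule bnd_pm[OF b1 b2])
  have e2: "pmult d (pm (pdpow (- int k)) (pconst (v k))) (pdpow (- int k)) = pm (pm (pdpow (- int k)) (pconst (v k))) (pdpow (- int k))"
    by (rule pmult_eq[OF b3 b1])
  show ?thesis unfolding Fp_def using k e1 e2 by simp
qed

lemma bnd_Fp: "bnd (-2 * int k) (Fp k)"
proof (cases "k = 0")
  case True then show ?thesis by (simp add: Fp_def bnd_def)
next
  case False
  have b1: "bnd (- int k) (pdpow (- int k))" by (rule bnd_pdpow) simp
  have b2: "bnd 0 (pconst (v k))" by (rule bnd_pconst) simp
  have "bnd (- int k + 0 + - int k) (pm (pm (pdpow (- int k)) (pconst (v k))) (pdpow (- int k)))"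
    by (rule bnd_pm[OF bnd_pm[OF b1 b2] b1])
  then show ?thesis using False by (simp add: Fp_eq)
qed

lemma pa_Fp: "pa (Fp k) = Fp k"
proof (cases "k = 0")
  case True
  have "pa (\<lambda>_. 0) = (\<lambda>_. 0 :: 'a)" by (rule ext) (simp add: pa_def)
  then show ?thesis using True by (simp add: Fp_def)
next
  case False
  let ?A = "pdpow (- int k) :: int \<Rightarrow> 'a" and ?c = "pconst (v k)" and ?s = "sga (- int k) :: 'a"
  have pA: "is_psdo ?A" by simp
  have pc: "is_psdo ?c" by simp
  have e0: "Fp k = pm (pm ?A ?c) ?A" using False by (rule Fp_eq)
  have e1: "pa (pm (pm ?A ?c) ?A) = pm (pa ?A) (pa (pm ?A ?c))" by (rule pa_mult2[OF ps_pm[OF pA pc] pA])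
  have e2: "pa (pm ?A ?c) = pm (pa ?c) (pa ?A)" by (rule pa_mult2[OF pA pc])
  have e3: "pa ?A = psc ?s ?A" by (rule pa_pdpow)
  have e4: "pa ?c = ?c" by (rule pa_pconst)
  have e5: "pm ?c (psc ?s ?A) = psc ?s (pm ?c ?A)" by (rule pscR'[OF pc pA])
  have e6: "pm (psc ?s ?A) (psc ?s (pm ?c ?A)) = psc ?s (pm ?A (psc ?s (pm ?c ?A)))" by (rule pscL[OF pA ps_psc[OF ps_pm[OF pc pA]]])
  have e7: "pm ?A (psc ?s (pm ?c ?A)) = psc ?s (pm ?A (pm ?c ?A))" by (rule pscR'[OF pA ps_pm[OF pc pA]])
  have e8: "psc ?s (psc ?s (pm ?A (pm ?c ?A))) = pm ?A (pm ?c ?A)" by (simp only: psc_psc sga_sq psc_1)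
  have e9: "pm ?A (pm ?c ?A) = pm (pm ?A ?c) ?A" by (rule assoc2[OF pA pc pA, symmetric])
  have s3: "pm (pa ?A) (pa (pm ?A ?c)) = pm (psc ?s ?A) (pm ?c (psc ?s ?A))"
    by (rule arg_cong2[where f=pm, OF e3 trans[OF e2 arg_cong2[where f=pm, OF e4 e3]]])
  have s4: "pm (psc ?s ?A) (pm ?c (psc ?s ?A)) = pm (psc ?s ?A) (psc ?s (pm ?c ?A))"
    by (rule arg_cong[where f="pm (psc ?s ?A)", OF e5])
  have s6: "psc ?s (pm ?A (psc ?s (pm ?c ?A))) = psc ?s (psc ?s (pm ?A (pm ?c ?A)))"
    by (rule arg_cong[where f="psc ?s", OF e7])
  show ?thesis
    apply (rule trans[OF arg_cong[where f=pa, OF e0]])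
    apply (rule trans[OF e1])
    apply (rule trans[OF s3])
    apply (rule trans[OF s4])
    apply (rule trans[OF e6])
    apply (rule trans[OF s6])
    apply (rule trans[OF e8])
    apply (rule trans[OF e9])
    apply (rule e0[symmetric])
    done
qed

lemma bnd_psumF: "bnd 2 (psum Fp)"
proof -
  have b0: "bnd 0 (Fp k)" for k by (rule bnd_mono[OF bnd_Fp]) simp
  show ?thesis by (rule bnd_mono[OF bnd_psum[OF b0]]) simp
qed

lemma bnd_TT: "bnd 2 TT"
  unfolding TT_def
  by (rule bnd_padd[OF bnd_padd[OF bnd_pdpow[OF order_refl] bnd_pconst] bnd_psumF]) simp

lemma ps_TT[simp]: "is_psdo TT" using bnd_TT by (auto simp: is_psdo_bnd)
lemma ps_LL[simp]: "is_psdo LL" by (simp add: LL_def)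

lemma pa_TT: "pa TT = TT"
proof -
  have bF: "bnd 2 (psum Fp)" by (rule bnd_psumF)
  have b2: "bnd 2 (padd (pdpow 2) (pconst (v 0)))" by (rule bnd_padd[OF bnd_pdpow[OF order_refl] bnd_pconst]) simp
  have e1: "pa TT = padd (pa (padd (pdpow 2) (pconst (v 0)))) (pa (psum Fp))"
    unfolding TT_def by (rule pa_padd[OF b2 bF])
  have e2: "pa (padd (pdpow 2) (pconst (v 0))) = padd (pa (pdpow 2)) (pa (pconst (v 0)))"
    by (rule pa_padd[OF bnd_pdpow[OF order_refl] bnd_pconst]) simp
  have s2: "sga 2 = (1::'a)" by (rule sga_even) simp
  have e3: "pa (pdpow 2) = (pdpow 2 :: int \<Rightarrow> 'a)" by (simp only: pa_pdpow s2 psc_1)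
  have e4: "pa (pconst (v 0)) = pconst (v 0)" by (rule pa_pconst)
  have e5: "pa (psum Fp) = psum Fp" by (rule pa_psum[OF bnd_Fp pa_Fp])
  have "pa TT = padd (padd (pdpow 2) (pconst (v 0))) (psum Fp)"
    by (subst e1, subst e2, subst e3, subst e4, subst e5, rule refl)
  also have "\<dots> = TT" by (simp only: TT_def)
  finally show ?thesis .
qed

lemma Lax_LL: "Lax d v = LL"
proof -
  have "Lax d v = pmult d (pdpow (-1)) TT" unfolding Lax_def TT_def Fp_def by (rule refl)
  also have "\<dots> = LL" unfolding LL_def by (rule pmult_eq[OF bnd_pdpow[OF order_refl] bnd_TT])
  finally show ?thesis .
qed

lemma pa_LL: "pa LL = psc (sga (-1)) (pm TT (pdpow (-1)))"
  unfolding LL_def by (simp add: pa_mult2 pa_TT pa_pdpow pscR')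

lemma d_LL: "pm (pdpow 1) LL = TT"
proof -
  have "pm (pdpow 1) LL = pm (pm (pdpow 1) (pdpow (-1))) TT" unfolding LL_def by (simp add: assoc2)
  also have "\<dots> = TT" by (simp add: pm_pdpow_pdpow pm_unit_left')
  finally show ?thesis .
qed

abbreviation MM where "MM n \<equiv> ppow d LL n"

lemma MM_props: "bnd (int n) (MM n) \<and> MM (Suc n) = pm (MM n) LL"
proof (induct n)
  case 0
  have b: "bnd 1 LL" unfolding LL_def using bnd_pm[OF bnd_pdpow[OF order_refl, of "-1"] bnd_TT] by simp
  show ?case using b by (simp add: bnd_pdpow pmult_eq[OF bnd_pdpow[OF order_refl] b])
next
  case (Suc n)
  have b: "bnd 1 LL" unfolding LL_def using bnd_pm[OF bnd_pdpow[OF order_refl, of "-1"] bnd_TT] by simp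
  have bs: "bnd (int (Suc n)) (MM (Suc n))" using Suc bnd_pm[OF _ b, of "int n" "MM n"] by (simp add: add.commute)
  then show ?case using pmult_eq[OF bs b] by simp
qed

lemma ps_MM[simp]: "is_psdo (MM n)" using MM_props[of n] by (auto simp: is_psdo_bnd)

lemma MM_Suc: "MM (Suc n) = pm (MM n) LL" using MM_props by blast

declare ppow.simps(2)[simp del]

lemma MM_comm: "pm LL (MM n) = pm (MM n) LL"
proof (induct n)
  case 0 then show ?case by (simp add: pm_unit_right pm_unit_left')
next
  case (Suc n)
  have "pm LL (MM (Suc n)) = pm (pm LL (MM n)) LL" by (simp add: MM_Suc assoc2)
  also have "\<dots> = pm (MM (Suc n)) LL" by (simp add: Suc MM_Suc)
  finally show ?case .
qed

lemma pa_MM: "pa (MM n) = psc (sga (int n)) (pm (pm (pdpow 1) (MM n)) (pdpow (-1)))"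
proof (induct n)
  case 0 then show ?case by (simp add: pa_pdpow pm_pdpow_pdpow)
next
  case (Suc n)
  let ?X = "pm (pm (pdpow 1) (MM n)) (pdpow (-1))"
  have dM: "pm (pdpow 1) (MM (Suc n)) = pm TT (MM n)"
  proof -
    have "pm (pdpow 1) (MM (Suc n)) = pm (pdpow 1) (pm LL (MM n))" by (simp add: MM_Suc MM_comm)
    also have "\<dots> = pm (pm (pdpow 1) LL) (MM n)" by (simp add: assoc2)
    finally show ?thesis by (simp add: d_LL)
  qed
  have core: "pm (pm TT (pdpow (-1))) ?X = pm (pm (pdpow 1) (MM (Suc n))) (pdpow (-1))"
  proof -
    have "pm (pm TT (pdpow (-1))) ?X = pm (pm (pm TT (pdpow (-1))) (pm (pdpow 1) (MM n))) (pdpow (-1))"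
      by (simp add: assoc2)
    also have "pm (pm TT (pdpow (-1))) (pm (pdpow 1) (MM n)) = pm TT (pm (pm (pdpow (-1)) (pdpow 1)) (MM n))"
      by (simp add: assoc2)
    also have "\<dots> = pm TT (MM n)" by (simp add: pm_pdpow_pdpow pm_unit_left')
    finally show ?thesis by (simp add: dM)
  qed
  have "pa (MM (Suc n)) = pm (pa LL) (pa (MM n))" by (simp add: MM_Suc pa_mult2)
  also have "\<dots> = pm (psc (sga (-1)) (pm TT (pdpow (-1)))) (psc (sga (int n)) ?X)" by (simp add: pa_LL Suc)
  also have "\<dots> = psc (sga (int n) * sga (-1)) (pm (pm TT (pdpow (-1))) ?X)" by (simp add: pscL pscR' psc_psc)
  also have "\<dots> = psc (sga (int (Suc n))) (pm (pm (pdpow 1) (MM (Suc n))) (pdpow (-1)))" by (simp only: sga_int_Suc mult.commute[of "sga (int n)"] core)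
  finally show ?case .
qed

lemma main_B:
  fixes n :: nat
  defines "B \<equiv> pm (MM (2*n+1)) (pdpow (-1))"
  shows "pa B = B" "B (-1) + B (-1) = 0" "is_psdo B"
proof -
  let ?m = "2*n+1"
  have s: "sga (int ?m) = (-1 :: 'a)" by (rule sga_odd) simp
  have s1: "sga (int ?m) * sga (-1) = (1 :: 'a)" by (simp only: sga_add) (rule sga_even, simp)
  have "pa B = pm (pa (pdpow (-1))) (pa (MM ?m))" unfolding B_def by (simp add: pa_mult2)
  also have "\<dots> = pm (psc (sga (-1)) (pdpow (-1))) (psc (sga (int ?m)) (pm (pm (pdpow 1) (MM ?m)) (pdpow (-1))))"
    by (simp only: pa_MM pa_pdpow)
  also have "\<dots> = psc (sga (int ?m) * sga (-1)) (pm (pdpow (-1)) (pm (pm (pdpow 1) (MM ?m)) (pdpow (-1))))"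
    by (simp add: pscL pscR' psc_psc)
  also have "\<dots> = pm (pdpow (-1)) (pm (pm (pdpow 1) (MM ?m)) (pdpow (-1)))" by (simp only: s1 psc_1)
  also have "\<dots> = pm (pm (pm (pdpow (-1)) (pdpow 1)) (MM ?m)) (pdpow (-1))" by (simp add: assoc2)
  also have "\<dots> = B" by (simp add: B_def pm_pdpow_pdpow pm_unit_left')
  finally show pB: "pa B = B" .
  show "is_psdo B" by (simp add: B_def)
  then obtain N where "bnd N B" by (auto simp: is_psdo_bnd)
  from pa_m1[OF this] pB have "B (-1) = - B (-1)" by simp
  then show "B (-1) + B (-1) = 0" by (metis add.right_inverse)
qed

lemma main_gen:
  assumes two: "\<And>x::'a. x + x = 0 \<Longrightarrow> x = 0"
  shows "is_diffop (pmult d (Aop d v n) (pdpow (-1))) \<and> self_adjoint d (pmult d (Aop d v n) (pdpow (-1)))"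
proof -
  define M where "M = MM (2*n+1)"
  define B where "B = pm M (pdpow (-1))"
  have B1: "pa B = B" and B2: "B (-1) + B (-1) = 0" and B3: "is_psdo B"
    using main_B[of n] unfolding B_def M_def by blast+
  have Bm1: "B (-1) = 0" using two[OF B2] .
  have pM: "is_psdo M" unfolding M_def by (rule ps_MM)
  obtain N where bM: "bnd N M" using pM by (auto simp: is_psdo_bnd)
  have A: "Aop d v n = pplus M" unfolding Aop_def Lax_LL M_def by (rule refl)
  have C: "pmult d (Aop d v n) (pdpow (-1)) = pm (pplus M) (pdpow (-1))"
    unfolding A by (rule pmult_eq[OF bnd_pplus[OF bM] bnd_pdpow[OF order_refl]])
  have CB: "pm (pplus M) (pdpow (-1)) = pplus B"
  proof
    fix j
    have Bj: "B j = M (j + 1)" unfolding B_def by (simp only: pm_pdpow_right diff_minus_eq_add)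
    have Cj: "pm (pplus M) (pdpow (-1)) j = pplus M (j + 1)" by (simp only: pm_pdpow_right diff_minus_eq_add)
    show "pm (pplus M) (pdpow (-1)) j = pplus B j"
    proof (cases "j = -1")
      case True
      have "B (-1) = M 0" using Bj True by simp
      then show ?thesis using True Cj Bm1 by (simp add: pplus_def)
    next
      case False
      then show ?thesis using Cj Bj by (simp add: pplus_def)
    qed
  qed
  obtain K where bB: "bnd K B" using B3 by (auto simp: is_psdo_bnd)
  have "is_psdo (pplus B)" using B3 by simp
  then have D1: "is_diffop (pplus B)" by (simp add: is_diffop_def pplus_def)
  have D2: "self_adjoint d (pplus B)"
    unfolding self_adjoint_def padj_eq[OF bnd_pplus[OF bB]] pa_pplus[OF bB] B1 by (rule refl)
  show ?thesis unfolding C CB using D1 D2 by blast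
qed

end
end

lemma lemma2_core:
  fixes d :: "'a::{idom, ring_char_0} \<Rightarrow> 'a" and v :: "nat \<Rightarrow> 'a"
  assumes "is_derivation d"
  shows "is_diffop (pmult d (Aop d v n) (pdpow (-1))) \<and> self_adjoint d (pmult d (Aop d v n) (pdpow (-1)))"
proof -
  interpret der d by unfold_locales (rule assms)
  show ?thesis
  proof (rule main_gen)
    fix x :: 'a assume "x + x = 0"
    then have "(2::'a) * x = 0" by (metis mult_2)
    then show "x = 0" by simp
  qed
qed



theorem lemma2:
  fixes d1 d2 :: "'a::{idom, ring_char_0} \<Rightarrow> 'a"
    and u :: 'a and v w :: "nat \<Rightarrow> 'a"
  assumes "is_derivation d1" and "is_derivation d2"
    and "\<And>a. d1 (d2 a) = d2 (d1 a)"
    and "(\<lambda>j. d2 (Lax d1 v j)) =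
           psub (pmult d1 (Lax d1 v) (pmult d1 (pdpow (-1)) (pconst u)))
                (pmult d1 (pmult d1 (pdpow (-1)) (pconst u)) (Lax d1 v))"
    and "(\<lambda>j. d1 (Lax d2 w j)) =
           psub (pmult d2 (Lax d2 w) (pmult d2 (pdpow (-1)) (pconst u)))
                (pmult d2 (pmult d2 (pdpow (-1)) (pconst u)) (Lax d2 w))"
  shows "\<forall>n. is_diffop (pmult d1 (Aop d1 v n) (pdpow (-1)))
            \<and> self_adjoint d1 (pmult d1 (Aop d1 v n) (pdpow (-1)))
            \<and> is_diffop (pmult d2 (Aop d2 w n) (pdpow (-1)))
            \<and> self_adjoint d2 (pmult d2 (Aop d2 w n) (pdpow (-1)))"
proof
  fix n
  have h1: "is_diffop (pmult d1 (Aop d1 v n) (pdpow (-1))) \<and> self_adjoint d1 (pmult d1 (Aop d1 v n) (pdpow (-1)))"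
    by (rule lemma2_core[OF assms(1)])
  have h2: "is_diffop (pmult d2 (Aop d2 w n) (pdpow (-1))) \<and> self_adjoint d2 (pmult d2 (Aop d2 w n) (pdpow (-1)))"
    by (rule lemma2_core[OF assms(2)])
  show "is_diffop (pmult d1 (Aop d1 v n) (pdpow (-1)))
            \<and> self_adjoint d1 (pmult d1 (Aop d1 v n) (pdpow (-1)))
            \<and> is_diffop (pmult d2 (Aop d2 w n) (pdpow (-1)))
            \<and> self_adjoint d2 (pmult d2 (Aop d2 w n) (pdpow (-1)))"
    using h1 h2 by blast
qed

end
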